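(* Let $1\le d\le n$. Let $C_n(d)$ be the complex vector space spanned by symbols $\tilde f_I^{(r)}$ ($I\in[n]^d$, $r=0,1,2,\dots$), modulo the alternating relations. These are the coefficients of $\tilde f_{\sigma I}(u)=\operatorname{sgn}(\sigma)\tilde f_I(u)$ for all $I\in[n]^d$ and $\sigma\in\mathfrak S_d$, where $\tilde f_I(u)=\sum_{r\ge0}\tilde f^{(r)}_Iu^{-r}$. Then $C_n(d)$ is a right $Y_n$-comodule with structure map $$\rho(\tilde f_I(u))=\sum_{J\in\binom{[n]}d}\tilde f_J(u)\otimes t^J_I(u)\qquad(I\in[n]^d),$$ i.e. $\rho(\tilde f^{(r)}_I)$ is the coefficient of $u^{-r}$ on the right, with $J$ listed increasingly.
   Context: $Y_n$ is the Yangian: the complex associative unital algebra with generators $t^{(r)}_{ij}$ ($1\le i,j\le n$, $r\ge1$) and relations $[t_{ij}^{(r+1)},t_{kl}^{(s)}]-[t_{ij}^{(r)},t_{kl}^{(s+1)}]=t_{kj}^{(r)}t_{il}^{(s)}-t_{kj}^{(s)}t_{il}^{(r)}$ ($r,s\ge0$, $t^{(0)}_{ij}=\delta_{ij}$). Put $t_{ij}(u)=\delta_{ij}+\sum_{r\ge1}t^{(r)}_{ij}u^{-r}$. $Y_n$ is a bialgebra with $\Delta(t_{ij}(u))=\sum_k t_{ik}(u)\otimes t_{kj}(u)$ and $\varepsilon(t_{ij}(u))=\delta_{ij}$, understood coefficientwise. For $a\in\mathbb C$, $t_{ij}(u+a)$ is obtained by expanding $(u+a)^{-r}$ in powers of $u^{-1}$.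 The Yangian minor of tuples $I,J\in[n]^d$ is $$t^I_J(u)=\sum_{\sigma\in\mathfrak S_d}\operatorname{sgn}(\sigma)\,t_{i_{\sigma(1)}j_1}(u)\,t_{i_{\sigma(2)}j_2}(u-1)\cdots t_{i_{\sigma(d)}j_d}(u-d+1).$$ *)

theory Defs
  imports Complex_Main "HOL-Library.Poly_Mapping" "HOL-Combinatorics.Permutations"
begin

type_synonym 'a vec = "'a \<Rightarrow>\<^sub>0 complex"

definition bv :: "'a \<Rightarrow> 'a vec" where
  "bv a = Poly_Mapping.single a 1"

definition smult :: "complex \<Rightarrow> 'a vec \<Rightarrow> 'a vec" where
  "smult c x = Poly_Mapping.map (\<lambda>z. c * z) x"

definition lext :: "('a \<Rightarrow> 'b vec) \<Rightarrow> 'a vec \<Rightarrow> 'b vec" where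
  "lext f x = (\<Sum>a\<in>Poly_Mapping.keys x. smult (Poly_Mapping.lookup x a) (f a))"

definition tens :: "'a vec \<Rightarrow> 'b vec \<Rightarrow> ('a \<times> 'b) vec" where
  "tens x y = lext (\<lambda>p. lext (\<lambda>q. bv (p, q)) y) x"

inductive_set cspan :: "'a vec set \<Rightarrow> 'a vec set" for S where
  base: "x \<in> S \<Longrightarrow> x \<in> cspan S"
| zero: "0 \<in> cspan S"
| add: "x \<in> cspan S \<Longrightarrow> y \<in> cspan S \<Longrightarrow> x + y \<in> cspan S"
| smult: "x \<in> cspan S \<Longrightarrow> smult c x \<in> cspan S"

text \<open>A letter (i,j,r) stands for the generator t_ij^(r); words are noncommutative monomials.\<close>
type_synonym ygen = "nat \<times> nat \<times> nat"
type_synonym FA = "ygen list vec"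

definition fa_one :: FA where "fa_one = bv []"

definition fa_mult :: "FA \<Rightarrow> FA \<Rightarrow> FA" where
  "fa_mult x y = lext (\<lambda>v. lext (\<lambda>w. bv (v @ w)) y) x"

definition T :: "nat \<Rightarrow> nat \<Rightarrow> nat \<Rightarrow> FA" where
  "T i j r = (if r = 0 then (if i = j then fa_one else 0) else bv [(i, j, r)])"

definition yrel :: "nat \<Rightarrow> nat \<Rightarrow> nat \<Rightarrow> nat \<Rightarrow> nat \<Rightarrow> nat \<Rightarrow> FA" where
  "yrel i j k l r s =
     (fa_mult (T i j (Suc r)) (T k l s) - fa_mult (T k l s) (T i j (Suc r)))
   - (fa_mult (T i j r) (T k l (Suc s)) - fa_mult (T k l (Suc s)) (T i j r))
   - (fa_mult (T k j r) (T i l s) - fa_mult (T k j s) (T i l r))"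

text \<open>Two-sided ideal of the free algebra generated by the defining relations of Y_n.\<close>
definition yideal :: "nat \<Rightarrow> FA set" where
  "yideal n = cspan {fa_mult (fa_mult a (yrel i j k l r s)) b | a b i j k l r s.
      i \<in> {1..n} \<and> j \<in> {1..n} \<and> k \<in> {1..n} \<and> l \<in> {1..n}}"

text \<open>Comultiplication on representatives: Delta(t_ij^(r)) = sum_k sum_(a+b=r) t_ik^(a) (x) t_kj^(b),
  extended multiplicatively to words and linearly to the free algebra.\<close>
definition tt_mult :: "(ygen list \<times> ygen list) vec \<Rightarrow> (ygen list \<times> ygen list) vec
                       \<Rightarrow> (ygen list \<times> ygen list) vec" where
  "tt_mult x y = lext (\<lambda>(v1, v2). lext (\<lambda>(w1, w2). bv (v1 @ w1, v2 @ w2)) y) x"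

definition delta_gen :: "nat \<Rightarrow> ygen \<Rightarrow> (ygen list \<times> ygen list) vec" where
  "delta_gen n g = (case g of (i, j, r) \<Rightarrow>
      (\<Sum>k\<in>{1..n}. \<Sum>a\<in>{0..r}. tens (T i k a) (T k j (r - a))))"

definition delta_word :: "nat \<Rightarrow> ygen list \<Rightarrow> (ygen list \<times> ygen list) vec" where
  "delta_word n w = foldr (\<lambda>g acc. tt_mult (delta_gen n g) acc) w (bv ([], []))"

text \<open>Coefficient of u^-s in t_ij(u+a): (u+a)^-r expanded in powers of u^-1.\<close>
definition tser :: "nat \<Rightarrow> nat \<Rightarrow> complex \<Rightarrow> nat \<Rightarrow> FA" where
  "tser i j a s = (if s = 0 then T i j 0
     else (\<Sum>r\<in>{1..s}. smult (((- of_nat r) gchoose (s - r)) * a ^ (s - r)) (T i j r)))"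

definition ser_mult :: "(nat \<Rightarrow> FA) \<Rightarrow> (nat \<Rightarrow> FA) \<Rightarrow> nat \<Rightarrow> FA" where
  "ser_mult f g s = (\<Sum>m\<in>{0..s}. fa_mult (f m) (g (s - m)))"

definition ser_one :: "nat \<Rightarrow> FA" where
  "ser_one s = (if s = 0 then fa_one else 0)"

text \<open>Coefficient of u^-s in the Yangian minor t^I_J(u)
  = sum_sigma sgn sigma t_(i_sigma(1) j_1)(u) t_(i_sigma(2) j_2)(u-1) ... (0-based positions).\<close>
definition tminor :: "nat list \<Rightarrow> nat list \<Rightarrow> nat \<Rightarrow> FA" where
  "tminor I J s = (\<Sum>\<sigma>\<in>{\<sigma>. \<sigma> permutes {..<length J}}.
      smult (of_int (sign \<sigma>))
        (foldr (\<lambda>k acc. ser_mult (tser (I ! \<sigma> k) (J ! k) (- of_nat k)) acc)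
               [0..<length J] ser_one s))"

text \<open>Basis symbol (I, r) stands for f~_I^(r).\<close>
type_synonym cbas = "nat list \<times> nat"

definition valid_tuple :: "nat \<Rightarrow> nat \<Rightarrow> nat list \<Rightarrow> bool" where
  "valid_tuple n d I \<longleftrightarrow> length I = d \<and> set I \<subseteq> {1..n}"

definition perm_tuple :: "(nat \<Rightarrow> nat) \<Rightarrow> nat list \<Rightarrow> nat list" where
  "perm_tuple \<sigma> I = map (\<lambda>k. I ! \<sigma> k) [0..<length I]"

definition calt :: "nat \<Rightarrow> nat \<Rightarrow> cbas vec set" where
  "calt n d = cspan {bv (perm_tuple \<sigma> I, r) - smult (of_int (sign \<sigma>)) (bv (I, r)) | \<sigma> I r.
      valid_tuple n d I \<and> \<sigma> permutes {..<d}}"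

definition incr_tuples :: "nat \<Rightarrow> nat \<Rightarrow> nat list set" where
  "incr_tuples n d = {J. length J = d \<and> sorted_wrt (<) J \<and> set J \<subseteq> {1..n}}"

text \<open>rho(f~_I^(r)) = coefficient of u^-r in sum_J f~_J(u) (x) t^J_I(u).\<close>
definition rho_bas :: "nat \<Rightarrow> nat \<Rightarrow> cbas \<Rightarrow> (cbas \<times> ygen list) vec" where
  "rho_bas n d p = (case p of (I, r) \<Rightarrow>
      (\<Sum>J\<in>incr_tuples n d. \<Sum>a\<in>{0..r}. tens (bv (J, a)) (tminor J I (r - a))))"

definition rho :: "nat \<Rightarrow> nat \<Rightarrow> cbas vec \<Rightarrow> (cbas \<times> ygen list) vec" where
  "rho n d = lext (rho_bas n d)"

text \<open>rho (x) id and id (x) Delta, id (x) epsilon on representatives.\<close>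
definition rho_id :: "nat \<Rightarrow> nat \<Rightarrow> (cbas \<times> ygen list) vec \<Rightarrow> (cbas \<times> ygen list \<times> ygen list) vec" where
  "rho_id n d = lext (\<lambda>(p, w). lext (\<lambda>(q, v). bv (q, v, w)) (rho_bas n d p))"

definition id_delta :: "nat \<Rightarrow> (cbas \<times> ygen list) vec \<Rightarrow> (cbas \<times> ygen list \<times> ygen list) vec" where
  "id_delta n = lext (\<lambda>(p, w). lext (\<lambda>(v1, v2). bv (p, v1, v2)) (delta_word n w))"

text \<open>epsilon(t_ij^(r)) = 0 for r \<ge> 1, so epsilon of a word is 1 iff the word is empty.\<close>
definition id_eps :: "(cbas \<times> ygen list) vec \<Rightarrow> cbas vec" where
  "id_eps = lext (\<lambda>(p, w). if w = [] then bv p else 0)"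

text \<open>Kernels of the projections onto C (x) Y and C (x) Y (x) Y.\<close>
definition ker2 :: "nat \<Rightarrow> nat \<Rightarrow> (cbas \<times> ygen list) vec set" where
  "ker2 n d = cspan ({tens a y | a y. a \<in> calt n d} \<union> {tens x b | x b. b \<in> yideal n})"

definition ker3 :: "nat \<Rightarrow> nat \<Rightarrow> (cbas \<times> ygen list \<times> ygen list) vec set" where
  "ker3 n d = cspan ({tens a z | a z. a \<in> calt n d}
      \<union> {tens x (tens b y) | x b y. b \<in> yideal n}
      \<union> {tens x (tens y b) | x b y. b \<in> yideal n})"

end

theory Submission
  imports Defs "HOL-Library.Product_Plus" "HOL-Computational_Algebra.Formal_Power_Series"
begin

unbundle fps_syntax


instantiation list :: (type) monoid_add begin
definition "zero_list = []"
definition "plus_list = (@)"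
instance by standard (auto simp: zero_list_def plus_list_def)
end

lemma plus_list_eq [simp]: "(v::'a list) + w = v @ w" by (simp add: plus_list_def)
lemma zero_list_eq [simp]: "(0::'a list) = []" by (simp add: zero_list_def)

lemma lookup_smult [simp]: "Poly_Mapping.lookup (smult c x) k = c * Poly_Mapping.lookup x k"
  by (simp add: smult_def map.rep_eq when_def)

lemma smult_add: "smult c (x + y) = smult c x + smult c y"
  by (rule poly_mapping_eqI) (simp add: lookup_add algebra_simps)
lemma smult_add_left: "smult (c + d) x = smult c x + smult d x"
  by (rule poly_mapping_eqI) (simp add: lookup_add algebra_simps)
lemma smult_smult [simp]: "smult c (smult d x) = smult (c*d) x"
  by (rule poly_mapping_eqI) (simp add: algebra_simps)
lemma smult_one [simp]: "smult 1 x = x"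
  by (rule poly_mapping_eqI) simp
lemma smult_zero [simp]: "smult c 0 = 0"
  by (rule poly_mapping_eqI) simp
lemma smult_zero_left [simp]: "smult 0 x = 0"
  by (rule poly_mapping_eqI) simp
lemma smult_minus: "smult c (- x) = - smult c x"
  by (rule poly_mapping_eqI) simp
lemma smult_diff: "smult c (x - y) = smult c x - smult c y"
  by (rule poly_mapping_eqI) (simp add: lookup_minus algebra_simps)
lemma smult_neg_left: "smult (- c) x = - smult c x"
  by (rule poly_mapping_eqI) simp
lemma smult_diff_left: "smult (c - d) x = smult c x - smult d x"
  by (rule poly_mapping_eqI) (simp add: lookup_minus algebra_simps)
lemma smult_sum: "smult c (sum f A) = (\<Sum>a\<in>A. smult c (f a))"
  by (rule poly_mapping_eqI) (simp add: lookup_sum sum_distrib_left)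
lemma smult_sum_left: "smult (sum f A) x = (\<Sum>a\<in>A. smult (f a) x)"
  by (rule poly_mapping_eqI) (simp add: lookup_sum sum_distrib_right)
lemma smult_single: "smult c (Poly_Mapping.single k v) = Poly_Mapping.single k (c * v)"
  by (rule poly_mapping_eqI) (simp add: lookup_single when_def)
lemma smult_bv: "smult c (bv a) = Poly_Mapping.single a c"
  by (simp add: bv_def smult_single)

lemma expand_superset:
  assumes "finite S" "Poly_Mapping.keys x \<subseteq> S"
  shows "x = (\<Sum>a\<in>S. Poly_Mapping.single a (Poly_Mapping.lookup x a))"
proof (rule poly_mapping_eqI)
  fix k
  have "(\<Sum>a\<in>S. Poly_Mapping.lookup (Poly_Mapping.single a (Poly_Mapping.lookup x a)) k) = (\<Sum>a\<in>S. if a = k then Poly_Mapping.lookup x k else 0)"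
    by (rule sum.cong) (auto simp: lookup_single when_def)
  also have "\<dots> = Poly_Mapping.lookup x k" using assms by (auto simp: in_keys_iff)
  finally show "Poly_Mapping.lookup x k = Poly_Mapping.lookup (\<Sum>a\<in>S. Poly_Mapping.single a (Poly_Mapping.lookup x a)) k"
    by (simp add: lookup_sum)
qed

lemma lext_superset:
  assumes "finite S" "Poly_Mapping.keys x \<subseteq> S"
  shows "lext f x = (\<Sum>a\<in>S. smult (Poly_Mapping.lookup x a) (f a))"
  unfolding lext_def using assms
  by (intro sum.mono_neutral_left) (auto simp: in_keys_iff)

lemma lext_add: "lext f (x + y) = lext f x + lext f y"
proof -
  let ?S = "Poly_Mapping.keys x \<union> Poly_Mapping.keys y"
  have "Poly_Mapping.keys (x + y) \<subseteq> ?S" by (rule keys_add)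
  then have "lext f (x + y) = (\<Sum>a\<in>?S. smult (Poly_Mapping.lookup (x+y) a) (f a))" by (intro lext_superset) auto
  also have "\<dots> = (\<Sum>a\<in>?S. smult (Poly_Mapping.lookup x a) (f a)) + (\<Sum>a\<in>?S. smult (Poly_Mapping.lookup y a) (f a))"
    by (simp add: lookup_add smult_add_left sum.distrib)
  also have "\<dots> = lext f x + lext f y"
    by (subst (1 2) lext_superset[of ?S]) auto
  finally show ?thesis .
qed

lemma keys_smult_sub: "Poly_Mapping.keys (smult c x) \<subseteq> Poly_Mapping.keys x"
  by (auto simp: in_keys_iff)

lemma lext_smult: "lext f (smult c x) = smult c (lext f x)"
  by (subst (1 2) lext_superset[of "Poly_Mapping.keys x"]) (auto simp: keys_smult_sub smult_sum)

lemma lext_zero [simp]: "lext f 0 = 0"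
  by (simp add: lext_def)

lemma lext_single: "lext f (Poly_Mapping.single a c) = smult c (f a)"
  by (subst lext_superset[of "{a}"]) (auto simp: lookup_single)

lemma lext_bv [simp]: "lext f (bv a) = f a"
  by (simp add: bv_def lext_single)

lemma lext_minus: "lext f (- x) = - lext f x"
  by (metis add_eq_0_iff lext_add lext_zero neg_eq_iff_add_eq_0)

lemma lext_diff: "lext f (x - y) = lext f x - lext f y"
  by (metis diff_conv_add_uminus lext_add lext_minus)

lemma lext_sum: "lext f (sum g A) = (\<Sum>a\<in>A. lext f (g a))"
  by (induction A rule: infinite_finite_induct) (auto simp: lext_add)

lemma lext_cong: "(\<And>a. a \<in> Poly_Mapping.keys x \<Longrightarrow> f a = g a) \<Longrightarrow> lext f x = lext g x"
  by (simp add: lext_def)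

lemma lext_fun_add: "lext (\<lambda>a. f a + g a) x = lext f x + lext g x"
  by (simp add: lext_def smult_add sum.distrib)
lemma lext_fun_smult: "lext (\<lambda>a. smult c (f a)) x = smult c (lext f x)"
  by (simp add: lext_def smult_sum mult.commute)
lemma lext_fun_zero [simp]: "lext (\<lambda>a. 0) x = 0"
  by (simp add: lext_def)
lemma lext_fun_minus: "lext (\<lambda>a. - f a) x = - lext f x"
  by (simp add: lext_def smult_minus sum_negf)
lemma lext_fun_diff: "lext (\<lambda>a. f a - g a) x = lext f x - lext g x"
  by (simp add: lext_def smult_diff sum_subtractf)
lemma lext_fun_sum: "lext (\<lambda>a. \<Sum>i\<in>I. f i a) x = (\<Sum>i\<in>I. lext (f i) x)"
  by (simp add: lext_def smult_sum sum.swap[of _ I])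

lemma lext_lext: "lext g (lext f x) = lext (\<lambda>a. lext g (f a)) x"
  unfolding lext_def[of f] lext_def[of "\<lambda>a. lext g (f a)"] by (simp add: lext_sum lext_smult)

lemma lext_bv_id [simp]: "lext bv x = x"
  unfolding lext_def by (subst (3) expand_superset[of "Poly_Mapping.keys x" x]) (auto simp: smult_bv)

lemma lext_eqI: "(\<And>a. f a = g a) \<Longrightarrow> lext f x = lext g x" by metis

lemma tens_bv [simp]: "tens (bv a) (bv b) = bv (a, b)"
  by (simp add: tens_def)
lemma tens_add1: "tens (x + y) z = tens x z + tens y z" by (simp add: tens_def lext_add)
lemma tens_add2: "tens x (y + z) = tens x y + tens x z" by (simp add: tens_def lext_add lext_fun_add)
lemma tens_smult1: "tens (smult c x) z = smult c (tens x z)" by (simp add: tens_def lext_smult)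
lemma tens_smult2: "tens x (smult c z) = smult c (tens x z)" by (simp add: tens_def lext_smult lext_fun_smult)
lemma tens_zero1 [simp]: "tens 0 z = 0" by (simp add: tens_def)
lemma tens_zero2 [simp]: "tens x 0 = 0" by (simp add: tens_def)
lemma tens_minus1: "tens (- x) z = - tens x z" by (simp add: tens_def lext_minus)
lemma tens_minus2: "tens x (- z) = - tens x z" by (simp add: tens_def lext_minus lext_fun_minus)
lemma tens_diff1: "tens (x - y) z = tens x z - tens y z" by (simp add: tens_def lext_diff)
lemma tens_diff2: "tens x (y - z) = tens x y - tens x z" by (simp add: tens_def lext_diff lext_fun_diff)
lemma tens_sum1: "tens (sum f A) z = (\<Sum>a\<in>A. tens (f a) z)" by (simp add: tens_def lext_sum)
lemma tens_sum2: "tens x (sum f A) = (\<Sum>a\<in>A. tens x (f a))" by (simp add: tens_def lext_sum lext_fun_sum)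
lemma tens_bv1: "tens (bv a) y = lext (\<lambda>q. bv (a, q)) y" by (simp add: tens_def)

lemma tens_lext2: "tens x (lext f y) = lext (\<lambda>b. tens x (f b)) y"
  by (simp add: lext_def tens_sum2 tens_smult2)
lemma tens_lext1: "tens (lext f x) y = lext (\<lambda>a. tens (f a) y) x"
  by (simp add: lext_def tens_sum1 tens_smult1)

section \<open>Ring structure\<close>

lemma bv_mult: "bv (a::'a::monoid_add) * bv b = bv (a + b)"
  by (simp add: bv_def mult_single)

lemma bv_zero_one: "bv (0::'a::monoid_add) = 1"
  by (simp add: bv_def)

lemma smult_conv: "smult c (x :: 'a::monoid_add vec) = Poly_Mapping.single 0 c * x"
  by (simp add: smult_def mult_map_scale_conv_mult)

lemma mult_expand:
  fixes x y :: "'a::monoid_add vec"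
  shows "x * y = (\<Sum>a\<in>Poly_Mapping.keys x. \<Sum>b\<in>Poly_Mapping.keys y. Poly_Mapping.single (a + b) (Poly_Mapping.lookup x a * Poly_Mapping.lookup y b))"
proof -
  have "x * y = (\<Sum>a\<in>Poly_Mapping.keys x. Poly_Mapping.single a (Poly_Mapping.lookup x a)) * (\<Sum>b\<in>Poly_Mapping.keys y. Poly_Mapping.single b (Poly_Mapping.lookup y b))"
    by (subst (1) expand_superset[of "Poly_Mapping.keys x" x], simp, simp, subst (1) expand_superset[of "Poly_Mapping.keys y" y]) auto
  also have "\<dots> = (\<Sum>a\<in>Poly_Mapping.keys x. \<Sum>b\<in>Poly_Mapping.keys y. Poly_Mapping.single (a + b) (Poly_Mapping.lookup x a * Poly_Mapping.lookup y b))"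
    by (simp add: sum_distrib_left sum_distrib_right mult_single) (rule sum.swap)
  finally show ?thesis .
qed

lemma smult_mult1: "smult c (x :: 'a::monoid_add vec) * y = smult c (x * y)"
  by (simp add: smult_conv mult.assoc)

lemma smult_mult2: "(x :: 'a::monoid_add vec) * smult c y = smult c (x * y)"
proof -
  have "x * smult c y = (\<Sum>a\<in>Poly_Mapping.keys x. Poly_Mapping.single a (Poly_Mapping.lookup x a)) * (\<Sum>b\<in>Poly_Mapping.keys y. Poly_Mapping.single b (Poly_Mapping.lookup (smult c y) b))"
    by (subst (1) expand_superset[of "Poly_Mapping.keys x" x], simp, simp, subst (1) expand_superset[of "Poly_Mapping.keys y" "smult c y"])
      (auto simp: keys_smult_sub)
  also have "\<dots> = smult c (\<Sum>a\<in>Poly_Mapping.keys x. \<Sum>b\<in>Poly_Mapping.keys y. Poly_Mapping.single (a + b) (Poly_Mapping.lookup x a * Poly_Mapping.lookup y b))"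
    by (simp add: sum_distrib_left sum_distrib_right mult_single smult_sum smult_single algebra_simps) (rule sum.swap)
  finally show ?thesis by (simp add: mult_expand)
qed

lemma smult_mult_both: "smult c (x :: 'a::monoid_add vec) * smult d y = smult (c * d) (x * y)"
  by (simp add: smult_mult1 smult_mult2 mult.commute)

lemma lext_mult_left: "lext (\<lambda>w. (z::'a::monoid_add vec) * f w) y = z * lext f y"
  by (simp add: lext_def sum_distrib_left smult_mult2)
lemma lext_mult_right: "lext (\<lambda>w. f w * (z::'a::monoid_add vec)) y = lext f y * z"
  by (simp add: lext_def sum_distrib_right smult_mult1)

lemma lext_mult_basis:
  fixes f :: "'a::monoid_add \<Rightarrow> 'b::monoid_add vec"
  assumes "\<And>a b. f (a + b) = f a * f b"
  shows "lext f (x * y) = lext f x * lext f y"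
proof -
  have "lext f (x * y) = (\<Sum>a\<in>Poly_Mapping.keys x. \<Sum>b\<in>Poly_Mapping.keys y. smult (Poly_Mapping.lookup x a * Poly_Mapping.lookup y b) (f (a + b)))"
    by (simp add: mult_expand lext_sum lext_single)
  also have "\<dots> = (\<Sum>a\<in>Poly_Mapping.keys x. \<Sum>b\<in>Poly_Mapping.keys y. smult (Poly_Mapping.lookup x a) (f a) * smult (Poly_Mapping.lookup y b) (f b))"
    by (simp add: assms smult_mult_both)
  also have "\<dots> = lext f x * lext f y"
    by (simp add: lext_def sum_distrib_left sum_distrib_right) (rule sum.swap)
  finally show ?thesis .
qed

lemma lext_lext_bv_mult:
  fixes x y :: "'a::monoid_add vec"
  shows "lext (\<lambda>v. lext (\<lambda>w. bv (v + w)) y) x = x * y"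
proof -
  have "lext (\<lambda>v. lext (\<lambda>w. bv (v + w)) y) x = lext (\<lambda>v. lext (\<lambda>w. bv v * bv w) y) x"
    by (simp add: bv_mult)
  also have "\<dots> = lext (\<lambda>v. bv v * lext bv y) x"
    by (simp only: lext_mult_left)
  also have "\<dots> = lext bv x * y"
    by (simp only: lext_mult_right lext_bv_id)
  finally show ?thesis by simp
qed

lemma fa_mult_eq [simp]: "fa_mult x y = x * y"
  unfolding fa_mult_def using lext_lext_bv_mult[of y x] by simp

lemma fa_one_eq [simp]: "fa_one = 1"
  using bv_zero_one[where 'a="ygen list"] by (simp add: fa_one_def)

lemma tt_mult_eq [simp]: "tt_mult x y = x * y"
proof -
  have "tt_mult x y = lext (\<lambda>v. lext (\<lambda>w. bv (v + w)) y) x"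
    unfolding tt_mult_def case_prod_unfold by (simp add: plus_prod_def)
  then show ?thesis by (simp add: lext_lext_bv_mult)
qed




definition lin :: "('a vec \<Rightarrow> 'b vec) \<Rightarrow> bool" where
  "lin f \<longleftrightarrow> (\<forall>x y. f (x + y) = f x + f y) \<and> (\<forall>c x. f (smult c x) = smult c (f x))"

lemma lin_zero: "lin f \<Longrightarrow> f 0 = 0"
  unfolding lin_def by (metis smult_zero_left)

lemma cspan_image:
  assumes "lin f" "\<And>x. x \<in> S \<Longrightarrow> f x \<in> cspan U" "x \<in> cspan S"
  shows "f x \<in> cspan U"
  using assms(3)
proof induction
  case (base x) then show ?case by (rule assms(2))
next
  case zero then show ?case using lin_zero[OF assms(1)] by (simp add: cspan.zero)
next
  case (add x y) then show ?case using assms(1) by (simp add: lin_def cspan.add)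
next
  case (smult x c) then show ?case using assms(1) by (simp add: lin_def cspan.smult)
qed

lemma cspan_mono: "S \<subseteq> U \<Longrightarrow> x \<in> cspan S \<Longrightarrow> x \<in> cspan U"
  by (erule cspan.induct) (auto intro: cspan.intros)

lemma cspan_neg: "x \<in> cspan S \<Longrightarrow> - x \<in> cspan S"
  using cspan.smult[of x S "-1"] by (simp add: smult_neg_left)

lemma cspan_diff: "x \<in> cspan S \<Longrightarrow> y \<in> cspan S \<Longrightarrow> x - y \<in> cspan S"
  by (metis cspan.add cspan_neg diff_conv_add_uminus)

lemma cspan_sum: "(\<And>a. a \<in> A \<Longrightarrow> f a \<in> cspan S) \<Longrightarrow> sum f A \<in> cspan S"
  by (induction A rule: infinite_finite_induct) (auto intro: cspan.intros)

lemma cspan_half: "smult 2 x \<in> cspan S \<Longrightarrow> x \<in> cspan S"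
  using cspan.smult[of "smult 2 x" S "1/2"] by simp

lemma lin_lext: "lin (lext f)" by (simp add: lin_def lext_add lext_smult)
lemma lin_tens1: "lin (\<lambda>x. tens x y)" by (simp add: lin_def tens_add1 tens_smult1)
lemma lin_tens2: "lin (\<lambda>y. tens x y)" by (simp add: lin_def tens_add2 tens_smult2)
lemma lin_mult_left: "lin (\<lambda>y. (x::'a::monoid_add vec) * y)" by (simp add: lin_def distrib_left smult_mult2)
lemma lin_mult_right: "lin (\<lambda>y. y * (x::'a::monoid_add vec))" by (simp add: lin_def distrib_right smult_mult1)

definition ygens :: "nat \<Rightarrow> FA set" where
  "ygens n = {fa_mult (fa_mult a (yrel i j k l r s)) b | a b i j k l r s.
      i \<in> {1..n} \<and> j \<in> {1..n} \<and> k \<in> {1..n} \<and> l \<in> {1..n}}"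

lemma ygensI: "i \<in> {1..n} \<Longrightarrow> j \<in> {1..n} \<Longrightarrow> k \<in> {1..n} \<Longrightarrow> l \<in> {1..n} \<Longrightarrow>
  fa_mult (fa_mult a (yrel i j k l r s)) b \<in> ygens n"
  unfolding ygens_def by blast

lemma yideal_ygens: "yideal n = cspan (ygens n)" by (simp add: yideal_def ygens_def)

lemma yideal_mult_left: assumes "x \<in> yideal n" shows "c * x \<in> yideal n"
proof -
  have "c * y \<in> cspan (ygens n)" if "y \<in> ygens n" for y
  proof -
    from that obtain a b i j k l r s where y0: "y = fa_mult (fa_mult a (yrel i j k l r s)) b"
      and c: "i \<in> {1..n} \<and> j \<in> {1..n} \<and> k \<in> {1..n} \<and> l \<in> {1..n}"
      unfolding ygens_def by blast
    have y: "y = a * yrel i j k l r s * b" using y0 by simp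
    have "c * y = fa_mult (fa_mult (c * a) (yrel i j k l r s)) b" by (simp add: y mult.assoc)
    then have "c * y \<in> ygens n" using c ygensI by simp
    then show ?thesis by (rule cspan.base)
  qed
  then show ?thesis using assms unfolding yideal_ygens by (rule cspan_image[OF lin_mult_left])
qed

lemma yideal_mult_right: assumes "x \<in> yideal n" shows "x * c \<in> yideal n"
proof -
  have "y * c \<in> cspan (ygens n)" if "y \<in> ygens n" for y
  proof -
    from that obtain a b i j k l r s where y0: "y = fa_mult (fa_mult a (yrel i j k l r s)) b"
      and c: "i \<in> {1..n} \<and> j \<in> {1..n} \<and> k \<in> {1..n} \<and> l \<in> {1..n}"
      unfolding ygens_def by blast
    have y: "y = a * yrel i j k l r s * b" using y0 by simp
    have "y * c = fa_mult (fa_mult a (yrel i j k l r s)) (b * c)" by (simp add: y mult.assoc)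
    then have "y * c \<in> ygens n" using c ygensI by simp
    then show ?thesis by (rule cspan.base)
  qed
  then show ?thesis using assms unfolding yideal_ygens by (rule cspan_image[OF lin_mult_right])
qed

lemma yrel_in: "i \<in> {1..n} \<Longrightarrow> j \<in> {1..n} \<Longrightarrow> k \<in> {1..n} \<Longrightarrow> l \<in> {1..n} \<Longrightarrow> yrel i j k l r s \<in> yideal n"
  unfolding yideal_ygens using ygensI[of i n j k l 1 r s 1] by (simp add: cspan.base)

lemma yideal_add: "x \<in> yideal n \<Longrightarrow> y \<in> yideal n \<Longrightarrow> x + y \<in> yideal n"
  unfolding yideal_def by (rule cspan.add)
lemma yideal_diff: "x \<in> yideal n \<Longrightarrow> y \<in> yideal n \<Longrightarrow> x - y \<in> yideal n"
  unfolding yideal_def by (rule cspan_diff)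
lemma yideal_smult: "x \<in> yideal n \<Longrightarrow> smult c x \<in> yideal n"
  unfolding yideal_def by (rule cspan.smult)
lemma yideal_sum: "(\<And>a. a \<in> A \<Longrightarrow> f a \<in> yideal n) \<Longrightarrow> sum f A \<in> yideal n"
  unfolding yideal_def by (rule cspan_sum)
lemma yideal_zero: "0 \<in> yideal n"
  unfolding yideal_def by (rule cspan.zero)
lemma yideal_neg: "x \<in> yideal n \<Longrightarrow> - x \<in> yideal n"
  unfolding yideal_def by (rule cspan_neg)

section \<open>Scalar series\<close>

definition Gs :: "complex \<Rightarrow> nat \<Rightarrow> complex fps" where
  "Gs a r = Abs_fps (\<lambda>N. ((- of_nat r) gchoose N) * a ^ N)"

definition P :: "complex \<Rightarrow> nat \<Rightarrow> complex fps" where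
  "P a r = fps_X ^ r * Gs a r"

lemma P_nth: "P a r $ N = (if N < r then 0 else ((- of_nat r) gchoose (N - r)) * a ^ (N - r))"
  by (simp add: P_def Gs_def fps_X_power_mult_nth)

lemma Gs_rec: "Gs a (Suc r) * (1 + fps_const a * fps_X) = Gs a r"
proof (rule fps_ext)
  fix N
  show "(Gs a (Suc r) * (1 + fps_const a * fps_X)) $ N = Gs a r $ N"
  proof (cases N)
    case 0 then show ?thesis by (simp add: Gs_def)
  next
    case (Suc M)
    have "(Gs a (Suc r) * (1 + fps_const a * fps_X)) $ N = Gs a (Suc r) $ N + a * (fps_X * Gs a (Suc r)) $ N"
    proof -
      have "Gs a (Suc r) * (1 + fps_const a * fps_X) = Gs a (Suc r) + fps_const a * (fps_X * Gs a (Suc r))"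
        by (simp add: algebra_simps)
      then show ?thesis by simp
    qed
    also have "\<dots> = a ^ N * (((- of_nat (Suc r)) gchoose Suc M) + ((- of_nat (Suc r)) gchoose M))"
      using Suc by (simp add: Gs_def algebra_simps)
    also have "((- of_nat (Suc r)) gchoose Suc M) + ((- of_nat (Suc r)) gchoose M) = ((- of_nat r) gchoose Suc M :: complex)"
    proof -
      have "(- of_nat (Suc r) + 1 :: complex) = - of_nat r" by simp
      then show ?thesis using gbinomial_Suc_Suc[of "- of_nat (Suc r) :: complex" M] by (simp add: add.commute)
    qed
    finally show ?thesis using Suc by (simp add: Gs_def)
  qed
qed

lemma P_rec: "P a (Suc r) * (1 + fps_const a * fps_X) = fps_X * P a r"
proof -
  have "P a (Suc r) * (1 + fps_const a * fps_X) = fps_X * (fps_X ^ r * (Gs a (Suc r) * (1 + fps_const a * fps_X)))"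
    by (simp add: P_def algebra_simps)
  then show ?thesis by (simp add: Gs_rec P_def)
qed

lemma P_key:
  assumes "a = b + 1"
  shows "P a r * P b (Suc s) - P a (Suc r) * P b s = P a (Suc r) * P b (Suc s)"
proof -
  have h1: "fps_X * P a r = P a (Suc r) * (1 + fps_const a * fps_X)" by (simp add: P_rec)
  have h2: "fps_X * P b s = P b (Suc s) * (1 + fps_const b * fps_X)" by (simp add: P_rec)
  have "fps_X * (P a r * P b (Suc s) - P a (Suc r) * P b s) =
        (fps_X * P a r) * P b (Suc s) - P a (Suc r) * (fps_X * P b s)"
    by (simp add: algebra_simps)
  also have "\<dots> = P a (Suc r) * (1 + fps_const a * fps_X) * P b (Suc s) - P a (Suc r) * (P b (Suc s) * (1 + fps_const b * fps_X))"
    by (simp only: h1 h2)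
  also have "\<dots> = fps_X * (P a (Suc r) * P b (Suc s))"
  proof -
    have ca: "fps_const a = fps_const b + 1" using assms by (simp flip: fps_const_1_eq_1 del: fps_const_1_eq_1)
    show ?thesis by (simp add: ca algebra_simps)
  qed
  finally show ?thesis by simp
qed

lemma P_vanish: "N < r + s \<Longrightarrow> (P a r * P b s) $ N = 0"
proof -
  assume "N < r + s"
  have "P a r * P b s = fps_X ^ (r + s) * (Gs a r * Gs b s)" by (simp add: P_def algebra_simps power_add)
  then show ?thesis using \<open>N < r + s\<close> by (simp add: fps_X_power_mult_nth)
qed

lemma P_nth_zero: "m < r \<Longrightarrow> P a r $ m = 0" by (simp add: P_nth)




lemma T0: "T i j 0 = (if i = j then 1 else 0)" by (simp add: T_def)

definition ts :: "nat \<Rightarrow> nat \<Rightarrow> complex \<Rightarrow> FA fps" where "ts i j a = Abs_fps (tser i j a)"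

lemma ts_nth: "ts i j a $ m = tser i j a m" by (simp add: ts_def)

lemma P_nth_0: "0 < m \<Longrightarrow> P a 0 $ m = 0" by (simp add: P_nth gbinomial_0_left)

lemma tser_expand:
  assumes "m \<le> M"
  shows "tser i j a m = (\<Sum>r\<le>M. smult (P a r $ m) (T i j r))"
proof (cases "m = 0")
  case True
  have "(\<Sum>r\<le>M. smult (P a r $ m) (T i j r)) = (\<Sum>r\<in>{0}. smult (P a r $ m) (T i j r))"
    by (rule sum.mono_neutral_right) (auto simp: True P_nth)
  then show ?thesis using True by (simp add: tser_def P_nth)
next
  case False
  have "(\<Sum>r\<le>M. smult (P a r $ m) (T i j r)) = (\<Sum>r\<in>{1..m}. smult (P a r $ m) (T i j r))"
  proof (rule sum.mono_neutral_right)
    show "\<forall>r\<in>{..M} - {1..m}. smult (P a r $ m) (T i j r) = 0"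
    proof
      fix r assume "r \<in> {..M} - {1..m}"
      then have "r = 0 \<or> m < r" by auto
      then show "smult (P a r $ m) (T i j r) = 0" using False by (auto simp: P_nth gbinomial_0_left)
    qed
  qed (use assms in auto)
  also have "\<dots> = tser i j a m"
    using False by (simp add: tser_def P_nth)
  finally show ?thesis by simp
qed

lemma CP: "(ts i j a * ts k l b) $ N = (\<Sum>r\<le>N. \<Sum>s\<le>N. smult ((P a r * P b s) $ N) (T i j r * T k l s))"
proof -
  have "(ts i j a * ts k l b) $ N = (\<Sum>m=0..N. tser i j a m * tser k l b (N - m))"
    by (simp add: ts_def fps_mult_nth)
  also have "\<dots> = (\<Sum>m=0..N. (\<Sum>r\<le>N. smult (P a r $ m) (T i j r)) * (\<Sum>s\<le>N. smult (P b s $ (N-m)) (T k l s)))"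
    by (intro sum.cong refl) (simp add: tser_expand[of _ N])
  also have "\<dots> = (\<Sum>m=0..N. \<Sum>r\<le>N. \<Sum>s\<le>N. smult (P a r $ m * P b s $ (N-m)) (T i j r * T k l s))"
    by (simp add: sum_distrib_left sum_distrib_right smult_mult_both) (rule sum.cong[OF refl], rule sum.swap)
  also have "\<dots> = (\<Sum>r\<le>N. \<Sum>s\<le>N. \<Sum>m=0..N. smult (P a r $ m * P b s $ (N-m)) (T i j r * T k l s))"
    by (subst sum.swap) (simp add: sum.swap[of _ "{0..N}"])
  also have "\<dots> = (\<Sum>r\<le>N. \<Sum>s\<le>N. smult ((P a r * P b s) $ N) (T i j r * T k l s))"
    by (simp add: fps_mult_nth smult_sum_left)
  finally show ?thesis .
qed

lemma abel_K:
  fixes q :: "nat \<Rightarrow> nat \<Rightarrow> complex" and G :: "nat \<Rightarrow> nat \<Rightarrow> 'a vec"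
  assumes G0: "\<And>s. G 0 s = 0" and G0': "\<And>r. G r 0 = 0"
    and qv: "\<And>r s. N < r + s \<Longrightarrow> q r s = 0"
    and qk: "\<And>r s. q r (Suc s) - q (Suc r) s = q (Suc r) (Suc s)"
  shows "(\<Sum>r\<le>N. \<Sum>s\<le>N. smult (q r s) (G (Suc r) s - G r (Suc s))) = (\<Sum>r\<le>N. \<Sum>s\<le>N. smult (q r s) (G r s))"
proof (cases N)
  case 0 then show ?thesis by (simp add: G0 G0')
next
  case (Suc M)
  have A1: "(\<Sum>r\<le>Suc M. \<Sum>s\<le>Suc M. smult (q r s) (G (Suc r) s)) = (\<Sum>r\<le>M. \<Sum>s\<le>M. smult (q r (Suc s)) (G (Suc r) (Suc s)))"
  proof -
    have "(\<Sum>r\<le>Suc M. \<Sum>s\<le>Suc M. smult (q r s) (G (Suc r) s)) = (\<Sum>r\<le>Suc M. \<Sum>s\<le>M. smult (q r (Suc s)) (G (Suc r) (Suc s)))"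
      by (rule sum.cong[OF refl]) (simp add: sum.atMost_Suc_shift G0' del: sum.atMost_Suc)
    also have "\<dots> = (\<Sum>r\<le>M. \<Sum>s\<le>M. smult (q r (Suc s)) (G (Suc r) (Suc s)))"
      using Suc by (simp add: qv)
    finally show ?thesis .
  qed
  have A2: "(\<Sum>r\<le>Suc M. \<Sum>s\<le>Suc M. smult (q r s) (G r (Suc s))) = (\<Sum>r\<le>M. \<Sum>s\<le>M. smult (q (Suc r) s) (G (Suc r) (Suc s)))"
  proof -
    have "(\<Sum>r\<le>Suc M. \<Sum>s\<le>Suc M. smult (q r s) (G r (Suc s))) = (\<Sum>r\<le>M. \<Sum>s\<le>Suc M. smult (q (Suc r) s) (G (Suc r) (Suc s)))"
      by (subst sum.atMost_Suc_shift) (simp add: G0 del: sum.atMost_Suc)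
    also have "\<dots> = (\<Sum>r\<le>M. \<Sum>s\<le>M. smult (q (Suc r) s) (G (Suc r) (Suc s)))"
      using Suc by (intro sum.cong[OF refl]) (simp add: qv)
    finally show ?thesis .
  qed
  have A3: "(\<Sum>r\<le>Suc M. \<Sum>s\<le>Suc M. smult (q r s) (G r s)) = (\<Sum>r\<le>M. \<Sum>s\<le>M. smult (q (Suc r) (Suc s)) (G (Suc r) (Suc s)))"
  proof -
    have "(\<Sum>r\<le>Suc M. \<Sum>s\<le>Suc M. smult (q r s) (G r s)) = (\<Sum>r\<le>M. \<Sum>s\<le>Suc M. smult (q (Suc r) s) (G (Suc r) s))"
      by (subst sum.atMost_Suc_shift) (simp add: G0 del: sum.atMost_Suc)
    also have "\<dots> = (\<Sum>r\<le>M. \<Sum>s\<le>M. smult (q (Suc r) (Suc s)) (G (Suc r) (Suc s)))"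
      by (rule sum.cong[OF refl]) (simp add: sum.atMost_Suc_shift G0' del: sum.atMost_Suc)
    finally show ?thesis .
  qed
  have "(\<Sum>r\<le>N. \<Sum>s\<le>N. smult (q r s) (G (Suc r) s - G r (Suc s))) =
     (\<Sum>r\<le>Suc M. \<Sum>s\<le>Suc M. smult (q r s) (G (Suc r) s)) - (\<Sum>r\<le>Suc M. \<Sum>s\<le>Suc M. smult (q r s) (G r (Suc s)))"
    using Suc by (simp add: smult_diff sum_subtractf del: sum.atMost_Suc)
  also have "\<dots> = (\<Sum>r\<le>M. \<Sum>s\<le>M. smult (q r (Suc s) - q (Suc r) s) (G (Suc r) (Suc s)))"
    by (simp only: A1 A2 smult_diff_left sum_subtractf)
  also have "\<dots> = (\<Sum>r\<le>N. \<Sum>s\<le>N. smult (q r s) (G r s))"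
    using Suc by (simp only: A3 qk)
  finally show ?thesis .
qed

lemma CP_swap: "(ts k l b * ts i j a) $ N = (\<Sum>r\<le>N. \<Sum>s\<le>N. smult ((P a r * P b s) $ N) (T k l s * T i j r))"
  by (simp add: CP mult.commute[of "P b _"]) (rule sum.swap)

lemma R1:
  assumes ij: "i \<in> {1..n}" "j \<in> {1..n}" "k \<in> {1..n}" "l \<in> {1..n}" and ab: "a = b + 1"
  shows "(ts i j a * ts k l b - ts k l b * ts i j a - ts k j a * ts i l b + ts k j b * ts i l a) $ N \<in> yideal n"
proof -
  define q where "q r s = (P a r * P b s) $ N" for r s
  define G where "G r s = T i j r * T k l s - T k l s * T i j r" for r s
  define H where "H r s = T k j r * T i l s - T k j s * T i l r" for r s
  have "(ts i j a * ts k l b - ts k l b * ts i j a - ts k j a * ts i l b + ts k j b * ts i l a) $ N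
     = (\<Sum>r\<le>N. \<Sum>s\<le>N. smult (q r s) (T i j r * T k l s)) - (\<Sum>r\<le>N. \<Sum>s\<le>N. smult (q r s) (T k l s * T i j r))
       - (\<Sum>r\<le>N. \<Sum>s\<le>N. smult (q r s) (T k j r * T i l s)) + (\<Sum>r\<le>N. \<Sum>s\<le>N. smult (q r s) (T k j s * T i l r))"
    unfolding q_def by (simp only: fps_add_nth fps_sub_nth CP[of i j a k l b] CP_swap[of k l b i j a] CP[of k j a i l b] CP_swap[of k j b i l a])
  also have "\<dots> = (\<Sum>r\<le>N. \<Sum>s\<le>N. smult (q r s) (G r s - H r s))"
    by (simp add: G_def H_def smult_diff smult_add sum_subtractf sum.distrib algebra_simps)
  also have "\<dots> = (\<Sum>r\<le>N. \<Sum>s\<le>N. smult (q r s) (G r s)) - (\<Sum>r\<le>N. \<Sum>s\<le>N. smult (q r s) (H r s))"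
    by (simp add: smult_diff sum_subtractf)
  also have "(\<Sum>r\<le>N. \<Sum>s\<le>N. smult (q r s) (G r s)) = (\<Sum>r\<le>N. \<Sum>s\<le>N. smult (q r s) (G (Suc r) s - G r (Suc s)))"
  proof (rule abel_K[symmetric])
    show "G 0 s = 0" for s by (simp add: G_def T0)
    show "G r 0 = 0" for r by (simp add: G_def T0)
    show "N < r + s \<Longrightarrow> q r s = 0" for r s by (simp add: q_def P_vanish)
    show "q r (Suc s) - q (Suc r) s = q (Suc r) (Suc s)" for r s
      using P_key[OF ab, of r s] by (simp add: q_def flip: fps_sub_nth)
  qed
  also have "(\<Sum>r\<le>N. \<Sum>s\<le>N. smult (q r s) (G (Suc r) s - G r (Suc s))) - (\<Sum>r\<le>N. \<Sum>s\<le>N. smult (q r s) (H r s))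
     = (\<Sum>r\<le>N. \<Sum>s\<le>N. smult (q r s) (yrel i j k l r s))"
    by (simp add: yrel_def G_def H_def smult_diff sum_subtractf)
  also have "\<dots> \<in> yideal n"
    using ij by (intro yideal_sum yideal_smult yrel_in)
  finally show ?thesis .
qed




definition idl :: "nat \<Rightarrow> FA fps \<Rightarrow> bool" where "idl n F \<longleftrightarrow> (\<forall>s. F $ s \<in> yideal n)"

lemma idl_add: "idl n F \<Longrightarrow> idl n G \<Longrightarrow> idl n (F + G)" by (simp add: idl_def yideal_add)
lemma idl_diff: "idl n F \<Longrightarrow> idl n G \<Longrightarrow> idl n (F - G)" by (simp add: idl_def yideal_diff)
lemma idl_mult_left: "idl n F \<Longrightarrow> idl n (A * F)"
  by (simp add: idl_def fps_mult_nth yideal_sum yideal_mult_left)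
lemma idl_mult_right: "idl n F \<Longrightarrow> idl n (F * A)"
  by (simp add: idl_def fps_mult_nth yideal_sum yideal_mult_right)

definition gfac :: "nat list \<Rightarrow> nat list \<Rightarrow> (nat \<Rightarrow> nat) \<Rightarrow> nat \<Rightarrow> FA fps" where
  "gfac J L \<sigma> m = ts (J ! \<sigma> m) (L ! m) (- of_nat m)"

definition Pr :: "nat list \<Rightarrow> nat list \<Rightarrow> (nat \<Rightarrow> nat) \<Rightarrow> FA fps" where
  "Pr J L \<sigma> = foldr (\<lambda>m acc. gfac J L \<sigma> m * acc) [0..<length L] 1"

lemma foldr_ser: "foldr (\<lambda>k acc. ser_mult (f k) acc) ks ser_one = (\<lambda>s. foldr (\<lambda>k acc. Abs_fps (f k) * acc) ks 1 $ s)"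
proof (induction ks)
  case Nil then show ?case by (auto simp: ser_one_def fun_eq_iff)
next
  case (Cons k ks) then show ?case by (simp add: ser_mult_def fps_mult_nth fun_eq_iff)
qed

definition perms :: "nat \<Rightarrow> (nat \<Rightarrow> nat) set" where "perms d = {\<sigma>. \<sigma> permutes {..<d}}"

lemma finite_perms [simp]: "finite (perms d)" by (simp add: perms_def finite_permutations)

lemma tminor_Pr: "tminor J L s = (\<Sum>\<sigma>\<in>perms (length L). smult (of_int (sign \<sigma>)) (Pr J L \<sigma> $ s))"
  unfolding tminor_def perms_def Pr_def gfac_def foldr_ser by (simp add: ts_def)

lemma foldr_mult_1: "foldr (\<lambda>m acc. (g m :: 'a::monoid_mult) * acc) xs Z = foldr (\<lambda>m acc. g m * acc) xs 1 * Z"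
  by (induction xs) (simp_all add: mult.assoc)

lemma length_perm_tuple [simp]: "length (perm_tuple \<sigma> L) = length L"
  by (simp add: perm_tuple_def)
lemma nth_perm_tuple [simp]: "m < length L \<Longrightarrow> perm_tuple \<sigma> L ! m = L ! \<sigma> m"
  by (simp add: perm_tuple_def)

lemma upt_split_adj:
  assumes "Suc k < d"
  shows "[0..<d] = [0..<k] @ k # Suc k # [Suc (Suc k)..<d]"
proof -
  have "[0..<d] = [0..<k] @ [k..<d]" using assms by (metis le_add_diff_inverse less_imp_le_nat Suc_lessD upt_add_eq_append zero_le)
  also have "[k..<d] = k # Suc k # [Suc (Suc k)..<d]" using assms by (simp add: upt_conv_Cons)
  finally show ?thesis .
qed

lemma Pr_split:
  assumes "Suc k < length L"
  shows "Pr J L \<sigma> = foldr (\<lambda>m acc. gfac J L \<sigma> m * acc) [0..<k] 1 * (gfac J L \<sigma> k * gfac J L \<sigma> (Suc k))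
     * foldr (\<lambda>m acc. gfac J L \<sigma> m * acc) [Suc (Suc k)..<length L] 1"
  unfolding Pr_def upt_split_adj[OF assms] foldr_append
  by (subst foldr_mult_1) (simp add: mult.assoc)

lemma combo_idl:
  assumes "i \<in> {1..n}" "i' \<in> {1..n}" "j \<in> {1..n}" "l \<in> {1..n}"
  shows "idl n (ts i l (- of_nat k) * ts i' j (- of_nat (Suc k)) + ts i j (- of_nat k) * ts i' l (- of_nat (Suc k))
              - ts i' l (- of_nat k) * ts i j (- of_nat (Suc k)) - ts i' j (- of_nat k) * ts i l (- of_nat (Suc k)))"
proof -
  let ?c = "- of_nat k :: complex" and ?c' = "- of_nat (Suc k) :: complex"
  have ab: "?c = ?c' + 1" by simp
  have 1: "idl n (ts i j ?c * ts i' l ?c' - ts i' l ?c' * ts i j ?c - ts i' j ?c * ts i l ?c' + ts i' j ?c' * ts i l ?c)"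
    unfolding idl_def using R1[OF assms(1,3,2,4) ab] by blast
  have 2: "idl n (ts i l ?c * ts i' j ?c' - ts i' j ?c' * ts i l ?c - ts i' l ?c * ts i j ?c' + ts i' l ?c' * ts i j ?c)"
    unfolding idl_def using R1[OF assms(1,4,2,3) ab] by blast
  have "idl n ((ts i j ?c * ts i' l ?c' - ts i' l ?c' * ts i j ?c - ts i' j ?c * ts i l ?c' + ts i' j ?c' * ts i l ?c)
     + (ts i l ?c * ts i' j ?c' - ts i' j ?c' * ts i l ?c - ts i' l ?c * ts i j ?c' + ts i' l ?c' * ts i j ?c))"
    by (rule idl_add[OF 1 2])
  then show ?thesis by (simp add: algebra_simps)
qed

lemma set_nth_in: "m < length J \<Longrightarrow> set J \<subseteq> A \<Longrightarrow> J ! m \<in> A"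
  by (meson nth_mem subsetD)

lemma adj_Y:
  assumes kd: "Suc k < length L" and len: "length J = length L" and J: "set J \<subseteq> {1..n}" and L: "set L \<subseteq> {1..n}"
    and sig: "\<sigma> \<in> perms (length L)"
  defines "\<tau> \<equiv> Transposition.transpose k (Suc k)"
  shows "idl n ((Pr J (perm_tuple \<tau> L) \<sigma> + Pr J L \<sigma>) - (Pr J (perm_tuple \<tau> L) (\<sigma> \<circ> \<tau>) + Pr J L (\<sigma> \<circ> \<tau>)))"
proof -
  let ?d = "length L"
  let ?L' = "perm_tuple \<tau> L"
  define A where "A = foldr (\<lambda>m acc. gfac J L \<sigma> m * acc) [0..<k] 1"
  define B where "B = foldr (\<lambda>m acc. gfac J L \<sigma> m * acc) [Suc (Suc k)..<?d] 1"
  have same: "gfac J L' \<sigma>' m = gfac J L \<sigma> m"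
    if "L' \<in> {L, ?L'}" "\<sigma>' \<in> {\<sigma>, \<sigma> \<circ> \<tau>}" "m < ?d" "m \<noteq> k" "m \<noteq> Suc k" for L' \<sigma>' m
    using that by (auto simp: gfac_def \<tau>_def)
  have split: "Pr J L' \<sigma>' = A * (gfac J L' \<sigma>' k * gfac J L' \<sigma>' (Suc k)) * B"
    if "L' \<in> {L, ?L'}" "\<sigma>' \<in> {\<sigma>, \<sigma> \<circ> \<tau>}" for L' \<sigma>'
  proof -
    have lL: "length L' = ?d" using that by auto
    have "Pr J L' \<sigma>' = foldr (\<lambda>m acc. gfac J L' \<sigma>' m * acc) [0..<k] 1 * (gfac J L' \<sigma>' k * gfac J L' \<sigma>' (Suc k))
     * foldr (\<lambda>m acc. gfac J L' \<sigma>' m * acc) [Suc (Suc k)..<?d] 1"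
      using Pr_split[of k L' J \<sigma>'] kd lL by simp
    also have "foldr (\<lambda>m acc. gfac J L' \<sigma>' m * acc) [0..<k] 1 = A"
      unfolding A_def using kd by (intro foldr_cong refl) (auto simp: same[OF that])
    also have "foldr (\<lambda>m acc. gfac J L' \<sigma>' m * acc) [Suc (Suc k)..<?d] 1 = B"
      unfolding B_def using kd by (intro foldr_cong refl) (auto simp: same[OF that])
    finally show ?thesis .
  qed
  have sk: "\<sigma> k < ?d" "\<sigma> (Suc k) < ?d" using sig kd permutes_in_image[of \<sigma> "{..<length L}"] unfolding perms_def by auto
  let ?i = "J ! \<sigma> k" and ?i' = "J ! \<sigma> (Suc k)" and ?j = "L ! k" and ?l = "L ! Suc k"
  have ins: "?i \<in> {1..n}" "?i' \<in> {1..n}" "?j \<in> {1..n}" "?l \<in> {1..n}"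
    by (rule set_nth_in; use sk kd len J L in simp)+
  have eq: "(Pr J ?L' \<sigma> + Pr J L \<sigma>) - (Pr J ?L' (\<sigma> \<circ> \<tau>) + Pr J L (\<sigma> \<circ> \<tau>)) =
    A * (ts ?i ?l (- of_nat k) * ts ?i' ?j (- of_nat (Suc k)) + ts ?i ?j (- of_nat k) * ts ?i' ?l (- of_nat (Suc k))
              - ts ?i' ?l (- of_nat k) * ts ?i ?j (- of_nat (Suc k)) - ts ?i' ?j (- of_nat k) * ts ?i ?l (- of_nat (Suc k))) * B"
    using kd by (simp add: split gfac_def \<tau>_def algebra_simps)
  show ?thesis unfolding eq
    by (intro idl_mult_right idl_mult_left combo_idl ins)
qed

lemma perms_comp_transpose:
  assumes "\<sigma> \<in> perms d" "a < d" "b < d"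
  shows "\<sigma> \<circ> Transposition.transpose a b \<in> perms d"
    "sign (\<sigma> \<circ> Transposition.transpose a b) = (if a = b then sign \<sigma> else - sign \<sigma>)"
proof -
  have t: "Transposition.transpose a b permutes {..<d}" using assms by (intro permutes_swap_id) auto
  show "\<sigma> \<circ> Transposition.transpose a b \<in> perms d" using assms t unfolding perms_def by (auto intro: permutes_compose)
  have "permutation \<sigma>" using assms unfolding perms_def by (auto intro: permutes_imp_permutation)
  then show "sign (\<sigma> \<circ> Transposition.transpose a b) = (if a = b then sign \<sigma> else - sign \<sigma>)"
    by (simp add: sign_compose permutation_swap_id sign_swap_id)
qed

lemma sum_perms_reindex:
  assumes "a < d" "b < d"
  shows "(\<Sum>\<sigma>\<in>perms d. f (\<sigma> \<circ> Transposition.transpose a b)) = (\<Sum>\<sigma>\<in>perms d. f \<sigma>)"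
  by (rule sum.reindex_bij_witness[where i="\<lambda>\<sigma>. \<sigma> \<circ> Transposition.transpose a b" and j="\<lambda>\<sigma>. \<sigma> \<circ> Transposition.transpose a b"])
     (auto simp: o_assoc perms_comp_transpose assms)

lemma adj_AS:
  assumes kd: "Suc k < length L" and len: "length J = length L" and J: "set J \<subseteq> {1..n}" and L: "set L \<subseteq> {1..n}"
  shows "tminor J (perm_tuple (Transposition.transpose k (Suc k)) L) s + tminor J L s \<in> yideal n"
proof -
  define \<tau> where "\<tau> = Transposition.transpose k (Suc k)"
  let ?d = "length L"
  define Y where "Y \<sigma> = Pr J (perm_tuple \<tau> L) \<sigma> + Pr J L \<sigma>" for \<sigma>
  define X where "X = tminor J (perm_tuple \<tau> L) s + tminor J L s"
  have X1: "X = (\<Sum>\<sigma>\<in>perms ?d. smult (of_int (sign \<sigma>)) (Y \<sigma> $ s))"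
    by (simp add: X_def Y_def tminor_Pr sum.distrib smult_add)
  also have "\<dots> = (\<Sum>\<sigma>\<in>perms ?d. smult (of_int (sign (\<sigma> \<circ> \<tau>))) (Y (\<sigma> \<circ> \<tau>) $ s))"
    unfolding \<tau>_def using kd by (intro sum_perms_reindex[symmetric]) auto
  also have "\<dots> = (\<Sum>\<sigma>\<in>perms ?d. - smult (of_int (sign \<sigma>)) (Y (\<sigma> \<circ> \<tau>) $ s))"
    unfolding \<tau>_def using kd by (intro sum.cong refl) (simp add: perms_comp_transpose smult_neg_left)
  finally have X2: "X = - (\<Sum>\<sigma>\<in>perms ?d. smult (of_int (sign \<sigma>)) (Y (\<sigma> \<circ> \<tau>) $ s))"
    by (simp add: sum_negf)
  have "smult 2 X = X + X" by (rule poly_mapping_eqI) (simp add: lookup_add)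
  also have "\<dots> = (\<Sum>\<sigma>\<in>perms ?d. smult (of_int (sign \<sigma>)) ((Y \<sigma> - Y (\<sigma> \<circ> \<tau>)) $ s))"
    by (subst (1) X1, subst X2) (simp add: smult_diff sum_subtractf)
  also have "\<dots> \<in> yideal n"
  proof (intro yideal_sum yideal_smult)
    fix \<sigma> assume "\<sigma> \<in> perms ?d"
    then have "idl n (Y \<sigma> - Y (\<sigma> \<circ> \<tau>))"
      unfolding Y_def \<tau>_def using adj_Y[OF kd len J L] by blast
    then show "(Y \<sigma> - Y (\<sigma> \<circ> \<tau>)) $ s \<in> yideal n" by (simp add: idl_def)
  qed
  finally have "smult 2 X \<in> yideal n" .
  then show ?thesis unfolding X_def \<tau>_def yideal_def by (rule cspan_half)
qed

definition Phi :: "nat \<Rightarrow> nat list \<Rightarrow> nat \<Rightarrow> (nat \<Rightarrow> nat) \<Rightarrow> bool" where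
  "Phi n J d \<sigma> \<longleftrightarrow> (\<forall>L. length L = d \<longrightarrow> set L \<subseteq> {1..n} \<longrightarrow>
      (\<forall>s. tminor J (perm_tuple \<sigma> L) s - smult (of_int (sign \<sigma>)) (tminor J L s) \<in> yideal n))"

lemma perm_tuple_comp:
  assumes "\<sigma>2 \<in> perms (length L)"
  shows "perm_tuple \<sigma>2 (perm_tuple \<sigma>1 L) = perm_tuple (\<sigma>1 \<circ> \<sigma>2) L"
proof (rule nth_equalityI)
  fix k assume "k < length (perm_tuple \<sigma>2 (perm_tuple \<sigma>1 L))"
  then have k: "k < length L" by simp
  then have "\<sigma>2 k < length L" using assms permutes_in_image[of \<sigma>2 "{..<length L}"] unfolding perms_def by auto
  then show "perm_tuple \<sigma>2 (perm_tuple \<sigma>1 L) ! k = perm_tuple (\<sigma>1 \<circ> \<sigma>2) L ! k" using k by simp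
qed simp

lemma set_perm_tuple:
  assumes "\<sigma> \<in> perms (length L)"
  shows "set (perm_tuple \<sigma> L) \<subseteq> set L"
proof
  fix x assume "x \<in> set (perm_tuple \<sigma> L)"
  then obtain k where k: "k < length L" "x = L ! \<sigma> k" by (auto simp: in_set_conv_nth)
  then have "\<sigma> k < length L" using assms permutes_in_image[of \<sigma> "{..<length L}"] unfolding perms_def by auto
  then show "x \<in> set L" using k by simp
qed

lemma perm_tuple_id [simp]: "perm_tuple id L = L"
  by (rule nth_equalityI) auto

lemma Phi_id: "Phi n J d id"
  by (simp add: Phi_def yideal_zero)

lemma Phi_comp:
  assumes "Phi n J d \<sigma>1" "Phi n J d \<sigma>2" "\<sigma>1 \<in> perms d" "\<sigma>2 \<in> perms d"
  shows "Phi n J d (\<sigma>1 \<circ> \<sigma>2)"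
  unfolding Phi_def
proof (intro allI impI)
  fix L :: "nat list" and s assume L: "length L = d" "set L \<subseteq> {1..n}"
  let ?L1 = "perm_tuple \<sigma>1 L"
  have L1: "length ?L1 = d" "set ?L1 \<subseteq> {1..n}" using L set_perm_tuple[of \<sigma>1 L] assms(3) by auto
  have e: "perm_tuple (\<sigma>1 \<circ> \<sigma>2) L = perm_tuple \<sigma>2 ?L1" using perm_tuple_comp[of \<sigma>2 L \<sigma>1] assms(4) L by simp
  have sg: "sign (\<sigma>1 \<circ> \<sigma>2) = sign \<sigma>1 * sign \<sigma>2"
  proof -
    have "permutation \<sigma>1" "permutation \<sigma>2"
      using assms(3,4) unfolding perms_def by (auto intro: permutes_imp_permutation[OF finite_lessThan])
    then show ?thesis by (rule sign_compose)
  qed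
  have h1: "tminor J (perm_tuple \<sigma>2 ?L1) s - smult (of_int (sign \<sigma>2)) (tminor J ?L1 s) \<in> yideal n"
    using assms(2)[unfolded Phi_def, rule_format, OF L1] .
  have h2: "tminor J ?L1 s - smult (of_int (sign \<sigma>1)) (tminor J L s) \<in> yideal n"
    using assms(1)[unfolded Phi_def, rule_format, OF L] .
  have "tminor J (perm_tuple (\<sigma>1 \<circ> \<sigma>2) L) s - smult (of_int (sign (\<sigma>1 \<circ> \<sigma>2))) (tminor J L s)
    = (tminor J (perm_tuple \<sigma>2 ?L1) s - smult (of_int (sign \<sigma>2)) (tminor J ?L1 s))
      + smult (of_int (sign \<sigma>2)) (tminor J ?L1 s - smult (of_int (sign \<sigma>1)) (tminor J L s))"
    unfolding e sg by (rule poly_mapping_eqI) (simp add: lookup_add lookup_minus algebra_simps)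
  also have "\<dots> \<in> yideal n" using h1 h2 by (intro yideal_add yideal_smult)
  finally show "tminor J (perm_tuple (\<sigma>1 \<circ> \<sigma>2) L) s - smult (of_int (sign (\<sigma>1 \<circ> \<sigma>2))) (tminor J L s) \<in> yideal n" .
qed

lemma transpose_perms: "a < d \<Longrightarrow> b < d \<Longrightarrow> Transposition.transpose a b \<in> perms d"
  unfolding perms_def by (simp add: permutes_swap_id)

lemma Phi_adj:
  assumes "Suc k < d" "length J = d" "set J \<subseteq> {1..n}"
  shows "Phi n J d (Transposition.transpose k (Suc k))"
  unfolding Phi_def
proof (intro allI impI)
  fix L :: "nat list" and s assume L: "length L = d" "set L \<subseteq> {1..n}"
  have "tminor J (perm_tuple (Transposition.transpose k (Suc k)) L) s + tminor J L s \<in> yideal n"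
    using adj_AS[of k L J n s] assms L by simp
  then show "tminor J (perm_tuple (Transposition.transpose k (Suc k)) L) s -
     smult (of_int (sign (Transposition.transpose k (Suc k)))) (tminor J L s) \<in> yideal n"
    by (simp add: sign_swap_id smult_neg_left)
qed

lemma Phi_transpose:
  assumes "a < b" "b < d" "length J = d" "set J \<subseteq> {1..n}"
  shows "Phi n J d (Transposition.transpose a b)"
  using assms(1,2)
proof (induction b)
  case 0 then show ?case by simp
next
  case (Suc b)
  show ?case
  proof (cases "a = b")
    case True then show ?thesis using Suc.prems assms Phi_adj by blast
  next
    case False
    then have ab: "a < b" using Suc.prems by simp
    have eq: "Transposition.transpose a (Suc b) = (Transposition.transpose b (Suc b) \<circ> Transposition.transpose a b) \<circ> Transposition.transpose b (Suc b)"
      using transpose_comp_triple[of "Suc b" a b] ab by (simp add: transpose_commute)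
    have pa: "Phi n J d (Transposition.transpose b (Suc b))" using Suc.prems assms Phi_adj by blast
    have pb: "Phi n J d (Transposition.transpose a b)" using Suc.IH ab Suc.prems by simp
    have t1: "Transposition.transpose b (Suc b) \<in> perms d" "Transposition.transpose a b \<in> perms d"
      using Suc.prems ab by (auto intro: transpose_perms)
    have t2: "Transposition.transpose b (Suc b) \<circ> Transposition.transpose a b \<in> perms d"
      using t1 unfolding perms_def by (auto intro: permutes_compose)
    show ?thesis unfolding eq
      by (intro Phi_comp pa pb t1 t2)
  qed
qed

lemma Phi_all:
  assumes "\<sigma> \<in> perms d" "length J = d" "set J \<subseteq> {1..n}"
  shows "Phi n J d \<sigma>"
proof -
  have "\<sigma> permutes {..<d}" using assms unfolding perms_def by simp
  from this finite_lessThan[of d] show ?thesis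
  proof (induction rule: permutes_induct)
    case id then show ?case by (rule Phi_id)
  next
    case (swap a b p)
    have "Phi n J d (Transposition.transpose a b)"
    proof (cases "a < b")
      case True then show ?thesis using swap.hyps assms by (intro Phi_transpose) auto
    next
      case False
      then have "b < a" using swap by auto
      then have "Phi n J d (Transposition.transpose b a)" using swap.hyps assms by (intro Phi_transpose) auto
      then show ?thesis by (simp add: transpose_commute)
    qed
    moreover have "Transposition.transpose a b \<in> perms d" using swap.hyps by (intro transpose_perms) auto
    moreover have "p \<in> perms d" using swap.hyps by (simp add: perms_def)
    ultimately show ?case using swap.IH by (rule_tac Phi_comp) auto
  qed
qed

lemma tminor_antisym:
  assumes "\<sigma> \<in> perms (length L)" "length J = length L" "set J \<subseteq> {1..n}" "set L \<subseteq> {1..n}"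
  shows "tminor J (perm_tuple \<sigma> L) s - smult (of_int (sign \<sigma>)) (tminor J L s) \<in> yideal n"
  using Phi_all[OF assms(1,2,3), unfolded Phi_def, rule_format, OF refl assms(4)] .

lemma tminor_nondistinct:
  assumes "\<not> distinct L" "length J = length L" "set J \<subseteq> {1..n}" "set L \<subseteq> {1..n}"
  shows "tminor J L s \<in> yideal n"
proof -
  obtain a b where ab: "a < length L" "b < length L" "a \<noteq> b" "L ! a = L ! b"
    using assms(1) by (auto simp: distinct_conv_nth)
  let ?t = "Transposition.transpose a b"
  have "perm_tuple ?t L = L"
    by (rule nth_equalityI) (auto simp: ab transpose_def)
  moreover have "?t \<in> perms (length L)" using ab by (intro transpose_perms)
  ultimately have "tminor J L s - smult (-1) (tminor J L s) \<in> yideal n"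
    using tminor_antisym[of ?t L J n s] assms ab by (simp add: sign_swap_id)
  moreover have "tminor J L s - smult (-1) (tminor J L s) = smult 2 (tminor J L s)"
    by (rule poly_mapping_eqI) (simp add: lookup_minus)
  ultimately show ?thesis unfolding yideal_def by (simp add: cspan_half)
qed




section \<open>Combinatorics of tuples\<close>

lemma perms_permutes: "\<sigma> \<in> perms d \<Longrightarrow> \<sigma> permutes {..<d}" by (simp add: perms_def)

lemma perms_lt: "\<sigma> \<in> perms d \<Longrightarrow> k < d \<Longrightarrow> \<sigma> k < d"
  using permutes_in_image[of \<sigma> "{..<d}" k] by (auto simp: perms_def)

lemma set_perm_eq:
  assumes "\<sigma> \<in> perms (length J)"
  shows "set (perm_tuple \<sigma> J) = set J"
proof -
  have "set (perm_tuple \<sigma> J) = (\<lambda>k. J ! \<sigma> k) ` {..<length J}"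
    by (auto simp: perm_tuple_def)
  also have "\<dots> = (!) J ` (\<sigma> ` {..<length J})" by auto
  also have "\<sigma> ` {..<length J} = {..<length J}" using assms by (simp add: perms_def permutes_image)
  also have "(!) J ` {..<length J} = set J" by (auto simp: in_set_conv_nth)
  finally show ?thesis .
qed

lemma distinct_perm_eq:
  assumes "\<sigma> \<in> perms (length J)"
  shows "distinct (perm_tuple \<sigma> J) = distinct J"
  using set_perm_eq[OF assms] by (metis card_distinct distinct_card length_perm_tuple)

lemma perm_exists:
  assumes L: "distinct L" and K: "distinct K" and KL: "set K = set L"
  shows "\<exists>\<sigma>\<in>perms (length L). perm_tuple \<sigma> K = L"
proof -
  let ?d = "length L"
  have lK: "length K = ?d" using distinct_card[OF L] distinct_card[OF K] KL by simp
  define f where "f = inv_into {..<?d} ((!) K)"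
  define \<sigma> where "\<sigma> k = (if k < ?d then f (L ! k) else k)" for k
  have bK: "bij_betw ((!) K) {..<?d} (set K)" using K lK by (intro bij_betw_nth) auto
  have bL: "bij_betw ((!) L) {..<?d} (set L)" using L by (intro bij_betw_nth) auto
  have bf: "bij_betw f (set L) {..<?d}" unfolding f_def using bij_betw_inv_into[OF bK] KL by simp
  have "bij_betw (f \<circ> (!) L) {..<?d} {..<?d}" by (rule bij_betw_trans[OF bL bf])
  then have "bij_betw \<sigma> {..<?d} {..<?d}" by (subst bij_betw_cong[of _ _ "f \<circ> (!) L"]) (auto simp: \<sigma>_def)
  then have p: "\<sigma> permutes {..<?d}" by (rule bij_imp_permutes) (auto simp: \<sigma>_def)
  have "perm_tuple \<sigma> K = L"
  proof (rule nth_equalityI)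
    show "length (perm_tuple \<sigma> K) = length L" using lK by simp
    fix k assume "k < length (perm_tuple \<sigma> K)"
    then have k: "k < ?d" using lK by simp
    have "L ! k \<in> (!) K ` {..<?d}" using bK KL k by (auto simp: bij_betw_def)
    then show "perm_tuple \<sigma> K ! k = L ! k" using k lK by (simp add: \<sigma>_def f_def f_inv_into_f)
  qed
  then show ?thesis using p by (auto simp: perms_def)
qed

lemma perm_unique:
  assumes K: "distinct K" and s: "\<sigma> \<in> perms (length K)" "\<sigma>' \<in> perms (length K)"
    and eq: "perm_tuple \<sigma> K = perm_tuple \<sigma>' K"
  shows "\<sigma> = \<sigma>'"
proof
  fix k show "\<sigma> k = \<sigma>' k"
  proof (cases "k < length K")
    case True
    have "K ! \<sigma> k = K ! \<sigma>' k" using arg_cong[OF eq, of "\<lambda>l. l ! k"] True by simp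
    then show ?thesis using nth_eq_iff_index_eq[OF K] perms_lt[OF s(1) True] perms_lt[OF s(2) True] by blast
  next
    case False
    then have "\<sigma> k = k" "\<sigma>' k = k" using s permutes_not_in[of _ "{..<length K}" k] by (auto simp: perms_def)
    then show ?thesis by simp
  qed
qed

lemma incr_tuples_finite: "finite (incr_tuples n d)"
proof -
  have "incr_tuples n d \<subseteq> {xs. set xs \<subseteq> {1..n} \<and> length xs = d}" by (auto simp: incr_tuples_def)
  then show ?thesis by (rule finite_subset) (rule finite_lists_length_eq, simp)
qed

lemma incr_distinct: "J \<in> incr_tuples n d \<Longrightarrow> distinct J"
  by (auto simp: incr_tuples_def strict_sorted_iff)

lemma ker2_yideal: "b \<in> yideal n \<Longrightarrow> tens x b \<in> ker2 n d"
  unfolding ker2_def by (rule cspan.base) blast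

lemma ker2_sum: "(\<And>a. a \<in> A \<Longrightarrow> f a \<in> ker2 n d) \<Longrightarrow> sum f A \<in> ker2 n d"
  unfolding ker2_def by (rule cspan_sum)

definition cgens :: "nat \<Rightarrow> nat \<Rightarrow> cbas vec set" where
  "cgens n d = {bv (perm_tuple \<sigma> I, r) - smult (of_int (sign \<sigma>)) (bv (I, r)) | \<sigma> I r.
      valid_tuple n d I \<and> \<sigma> permutes {..<d}}"

lemma calt_cgens: "calt n d = cspan (cgens n d)" by (simp add: calt_def cgens_def)

lemma cgensI: "valid_tuple n d I \<Longrightarrow> \<sigma> permutes {..<d} \<Longrightarrow>
   bv (perm_tuple \<sigma> I, r) - smult (of_int (sign \<sigma>)) (bv (I, r)) \<in> cgens n d"
  unfolding cgens_def by blast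

lemma part1:
  assumes "x \<in> calt n d"
  shows "rho n d x \<in> ker2 n d"
proof -
  have "rho n d g \<in> ker2 n d" if "g \<in> cgens n d" for g
  proof -
    from that obtain \<sigma> I r where g: "g = bv (perm_tuple \<sigma> I, r) - smult (of_int (sign \<sigma>)) (bv (I, r))"
      and I: "valid_tuple n d I" and s: "\<sigma> permutes {..<d}" unfolding cgens_def by blast
    let ?c = "of_int (sign \<sigma>) :: complex"
    have "rho n d g = rho_bas n d (perm_tuple \<sigma> I, r) - smult ?c (rho_bas n d (I, r))"
      by (simp add: g rho_def lext_diff lext_smult)
    also have "\<dots> = (\<Sum>J\<in>incr_tuples n d. \<Sum>a\<in>{0..r}. tens (bv (J, a)) (tminor J (perm_tuple \<sigma> I) (r - a) - smult ?c (tminor J I (r - a))))"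
      by (simp add: rho_bas_def smult_sum tens_smult2 tens_diff2 sum_subtractf)
    also have "\<dots> \<in> ker2 n d"
    proof (intro ker2_sum ker2_yideal)
      fix J a assume J: "J \<in> incr_tuples n d"
      show "tminor J (perm_tuple \<sigma> I) (r - a) - smult ?c (tminor J I (r - a)) \<in> yideal n"
        using J I s by (intro tminor_antisym) (auto simp: incr_tuples_def valid_tuple_def perms_def)
    qed
    finally show ?thesis .
  qed
  then show ?thesis using assms unfolding calt_cgens ker2_def rho_def by (rule cspan_image[OF lin_lext])
qed

section \<open>Counit\<close>

definition eps :: "FA \<Rightarrow> complex" where "eps x = Poly_Mapping.lookup x []"

lemma eps_add: "eps (x + y) = eps x + eps y" by (simp add: eps_def lookup_add)
lemma eps_smult: "eps (smult c x) = c * eps x" by (simp add: eps_def)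
lemma eps_sum: "eps (sum f A) = (\<Sum>a\<in>A. eps (f a))" by (simp add: eps_def lookup_sum)
lemma eps_one: "eps 1 = 1" by (simp add: eps_def lookup_one)
lemma eps_zero: "eps 0 = 0" by (simp add: eps_def)

lemma eps_mult: "eps (x * y) = eps x * eps y"
proof -
  let ?S = "insert [] (Poly_Mapping.keys x)" and ?U = "insert [] (Poly_Mapping.keys y)"
  have "x * y = (\<Sum>a\<in>?S. Poly_Mapping.single a (Poly_Mapping.lookup x a)) * (\<Sum>b\<in>?U. Poly_Mapping.single b (Poly_Mapping.lookup y b))"
    by (subst (1) expand_superset[of ?S x], simp, blast, subst (1) expand_superset[of ?U y]) auto
  also have "\<dots> = (\<Sum>a\<in>?S. \<Sum>b\<in>?U. Poly_Mapping.single (a @ b) (Poly_Mapping.lookup x a * Poly_Mapping.lookup y b))"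
    by (simp add: sum_distrib_left sum_distrib_right mult_single) (rule sum.swap)
  finally have "eps (x * y) = (\<Sum>a\<in>?S. \<Sum>b\<in>?U. if a = [] \<and> b = [] then Poly_Mapping.lookup x a * Poly_Mapping.lookup y b else 0)"
    by (simp add: eps_def lookup_sum lookup_single when_def)
  also have "\<dots> = (\<Sum>a\<in>?S. if a = [] then (\<Sum>b\<in>?U. if b = [] then Poly_Mapping.lookup x a * Poly_Mapping.lookup y b else 0) else 0)"
    by (intro sum.cong refl) auto
  also have "\<dots> = eps x * eps y" by (simp add: eps_def)
  finally show ?thesis .
qed

lemma eps_T: "eps (T i j r) = (if r = 0 \<and> i = j then 1 else 0)"
  by (auto simp: T_def eps_def eps_one[unfolded eps_def] bv_def lookup_single)

lemma P0_nth: "P a 0 $ m = (if m = 0 then 1 else 0)" by (simp add: P_nth gbinomial_0_left)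

lemma eps_tser: "eps (tser i j a m) = (if m = 0 \<and> i = j then 1 else 0)"
proof -
  have "eps (tser i j a m) = (\<Sum>r\<le>m. P a r $ m * eps (T i j r))"
    by (simp add: tser_expand[of m m] eps_sum eps_smult)
  also have "\<dots> = (\<Sum>r\<le>m. if r = 0 then P a 0 $ m * (if i = j then 1 else 0) else 0)"
    by (intro sum.cong refl) (auto simp: eps_T)
  also have "\<dots> = (if m = 0 \<and> i = j then 1 else 0)" by (simp add: P0_nth)
  finally show ?thesis .
qed

definition epsf :: "FA fps \<Rightarrow> complex fps" where "epsf F = Abs_fps (\<lambda>s. eps (F $ s))"

lemma epsf_mult: "epsf (F * G) = epsf F * epsf G"
  by (rule fps_ext) (simp add: epsf_def fps_mult_nth eps_sum eps_mult)
lemma epsf_one: "epsf 1 = 1"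
  by (rule fps_ext) (simp add: epsf_def eps_one eps_zero)
lemma epsf_ts: "epsf (ts i j a) = (if i = j then 1 else 0)"
  by (rule fps_ext) (simp add: epsf_def ts_def eps_tser)

lemma epsf_foldr:
  assumes "\<And>m. m \<in> set xs \<Longrightarrow> epsf (g m) = (if c m then 1 else 0)"
  shows "epsf (foldr (\<lambda>m acc. g m * acc) xs 1) = (if (\<forall>m\<in>set xs. c m) then 1 else 0)"
  using assms by (induction xs) (auto simp: epsf_one epsf_mult)

lemma epsf_Pr: "epsf (Pr J L \<sigma>) = (if (\<forall>k\<in>set [0..<length L]. J ! \<sigma> k = L ! k) then 1 else 0)"
  unfolding Pr_def by (rule epsf_foldr) (simp add: gfac_def epsf_ts)

lemma eps_Pr: "eps (Pr J L \<sigma> $ s) = (if s = 0 \<and> (\<forall>k<length L. J ! \<sigma> k = L ! k) then 1 else 0)"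
proof -
  have "eps (Pr J L \<sigma> $ s) = epsf (Pr J L \<sigma>) $ s" by (simp add: epsf_def)
  then show ?thesis by (simp add: epsf_Pr)
qed

lemma perm_tuple_eq_iff:
  assumes "length J = length L"
  shows "perm_tuple \<sigma> J = L \<longleftrightarrow> (\<forall>k<length L. J ! \<sigma> k = L ! k)"
  using assms by (auto simp: list_eq_iff_nth_eq)

lemma eps_tminor:
  assumes "length J = length L"
  shows "eps (tminor J L s) = (if s = 0 then (\<Sum>\<sigma>\<in>perms (length L). if perm_tuple \<sigma> J = L then of_int (sign \<sigma>) else 0) else 0)"
  by (simp add: tminor_Pr eps_sum eps_smult eps_Pr perm_tuple_eq_iff[OF assms] if_distrib cong: if_cong)

lemma id_eps_tens: "id_eps (tens (bv p) y) = smult (eps y) (bv p)"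
proof -
  have "id_eps (tens (bv p) y) = lext (\<lambda>q. if q = [] then bv p else 0) y"
    by (simp add: id_eps_def tens_bv1 lext_lext)
  also have "\<dots> = smult (eps y) (bv p)"
  proof (cases "[] \<in> Poly_Mapping.keys y")
    case True
    then show ?thesis unfolding lext_def
      by (simp add: eps_def if_distrib sum.delta cong: if_cong)
  next
    case False
    then show ?thesis unfolding lext_def
      by (auto simp: eps_def in_keys_iff intro!: sum.neutral)
  qed
  finally show ?thesis .
qed

lemma id_eps_lin: "id_eps (x + y) = id_eps x + id_eps y" "id_eps (smult c x) = smult c (id_eps x)"
  "id_eps (sum f A) = (\<Sum>a\<in>A. id_eps (f a))"
  by (simp_all add: id_eps_def lext_add lext_smult lext_sum)

lemma sum_upto_delta: "(\<Sum>a\<in>{0..r}. smult (if r - a = 0 then c else 0) (bv (J, a))) = smult c (bv (J, r :: nat))"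
proof -
  have "(\<Sum>a\<in>{0..r}. smult (if r - a = 0 then c else 0) (bv (J, a))) = (\<Sum>a\<in>{0..r}. if a = r then smult c (bv (J, a)) else 0)"
    by (intro sum.cong refl) auto
  also have "\<dots> = smult c (bv (J, r))" by simp
  finally show ?thesis .
qed

lemma id_eps_rho_bas:
  assumes I: "length I = d"
  shows "id_eps (rho_bas n d (I, r)) = (\<Sum>J\<in>incr_tuples n d. smult (\<Sum>\<sigma>\<in>perms d. if perm_tuple \<sigma> J = I then of_int (sign \<sigma>) else 0) (bv (J, r)))"
proof -
  have "id_eps (rho_bas n d (I, r)) = (\<Sum>J\<in>incr_tuples n d. \<Sum>a\<in>{0..r}. smult (eps (tminor J I (r - a))) (bv (J, a)))"
    by (simp add: rho_bas_def id_eps_lin id_eps_tens)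
  also have "\<dots> = (\<Sum>J\<in>incr_tuples n d. \<Sum>a\<in>{0..r}. smult (if r - a = 0 then (\<Sum>\<sigma>\<in>perms d. if perm_tuple \<sigma> J = I then of_int (sign \<sigma>) else 0) else 0) (bv (J, a)))"
    using I by (intro sum.cong refl) (simp add: eps_tminor incr_tuples_def)
  also have "\<dots> = (\<Sum>J\<in>incr_tuples n d. smult (\<Sum>\<sigma>\<in>perms d. if perm_tuple \<sigma> J = I then of_int (sign \<sigma>) else 0) (bv (J, r)))"
    by (simp only: sum_upto_delta)
  finally show ?thesis .
qed

lemma calt_gen_in: "valid_tuple n d I \<Longrightarrow> \<sigma> \<in> perms d \<Longrightarrow>
   bv (perm_tuple \<sigma> I, r) - smult (of_int (sign \<sigma>)) (bv (I, r)) \<in> calt n d"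
  unfolding calt_cgens by (rule cspan.base, rule cgensI) (auto simp: perms_def)

lemma calt_neg: "x \<in> calt n d \<Longrightarrow> - x \<in> calt n d" unfolding calt_def by (rule cspan_neg)

lemma part3_basis:
  assumes I: "valid_tuple n d I"
  shows "id_eps (rho_bas n d (I, r)) - bv (I, r) \<in> calt n d"
proof (cases "distinct I")
  case True
  define K where "K = sorted_list_of_set (set I)"
  have lI: "length I = d" using I by (simp add: valid_tuple_def)
  have Ks: "sorted_wrt (<) K" "set K = set I" "length K = d"
    using distinct_card[OF True] lI by (simp_all add: K_def)
  have Kd: "distinct K" using Ks by (simp add: strict_sorted_iff)
  have Kin: "K \<in> incr_tuples n d" using Ks I by (simp add: incr_tuples_def valid_tuple_def)
  obtain \<sigma>0 where s0: "\<sigma>0 \<in> perms d" "perm_tuple \<sigma>0 K = I"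
    using perm_exists[OF True Kd Ks(2)] lI by auto
  have iff: "perm_tuple \<sigma> J = I \<longleftrightarrow> J = K \<and> \<sigma> = \<sigma>0" if J: "J \<in> incr_tuples n d" and s: "\<sigma> \<in> perms d" for J \<sigma>
  proof
    assume eq: "perm_tuple \<sigma> J = I"
    have lJ: "length J = d" using J by (simp add: incr_tuples_def)
    have "set J = set I" using set_perm_eq[of \<sigma> J] s lJ eq by simp
    then have "J = K" using J Ks by (intro strict_sorted_equal[symmetric]) (auto simp: incr_tuples_def)
    moreover have "\<sigma> = \<sigma>0" using perm_unique[OF Kd, of \<sigma> \<sigma>0] s s0 eq \<open>J = K\<close> Ks by simp
    ultimately show "J = K \<and> \<sigma> = \<sigma>0" by simp
  next
    assume "J = K \<and> \<sigma> = \<sigma>0" then show "perm_tuple \<sigma> J = I" using s0 by simp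
  qed
  have "id_eps (rho_bas n d (I, r)) = (\<Sum>J\<in>incr_tuples n d. smult (\<Sum>\<sigma>\<in>perms d. if J = K \<and> \<sigma> = \<sigma>0 then of_int (sign \<sigma>) else 0) (bv (J, r)))"
    unfolding id_eps_rho_bas[OF lI] by (intro sum.cong refl arg_cong2[where f=smult]) (auto simp: iff)
  also have "\<dots> = (\<Sum>J\<in>incr_tuples n d. if J = K then smult (of_int (sign \<sigma>0)) (bv (J, r)) else 0)"
    using s0 by (intro sum.cong refl) (auto simp: if_distrib cong: if_cong)
  also have "\<dots> = smult (of_int (sign \<sigma>0)) (bv (K, r))" using Kin incr_tuples_finite by simp
  finally have "id_eps (rho_bas n d (I, r)) - bv (I, r) = - (bv (perm_tuple \<sigma>0 K, r) - smult (of_int (sign \<sigma>0)) (bv (K, r)))"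
    using s0 by simp
  also have "\<dots> \<in> calt n d"
    using Kin s0 by (intro calt_neg calt_gen_in) (auto simp: valid_tuple_def incr_tuples_def)
  finally show ?thesis .
next
  case False
  have lI: "length I = d" using I by (simp add: valid_tuple_def)
  have "id_eps (rho_bas n d (I, r)) = 0"
  proof -
    have "(if perm_tuple \<sigma> J = I then of_int (sign \<sigma>) else 0) = (0::complex)"
      if "J \<in> incr_tuples n d" "\<sigma> \<in> perms d" for J \<sigma>
    proof -
      have "distinct (perm_tuple \<sigma> J)" using that distinct_perm_eq[of \<sigma> J] incr_distinct[OF that(1)]
        by (auto simp: incr_tuples_def)
      then show ?thesis using False by auto
    qed
    then show ?thesis unfolding id_eps_rho_bas[OF lI] by (simp add: sum.neutral)
  qed
  moreover have "bv (I, r) \<in> calt n d"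
  proof -
    obtain a b where ab: "a < length I" "b < length I" "a \<noteq> b" "I ! a = I ! b"
      using False by (auto simp: distinct_conv_nth)
    let ?t = "Transposition.transpose a b"
    have "perm_tuple ?t I = I" by (rule nth_equalityI) (auto simp: ab transpose_def)
    moreover have "?t \<in> perms d" using ab lI by (intro transpose_perms) auto
    ultimately have "bv (I, r) - smult (-1) (bv (I, r)) \<in> calt n d"
      using calt_gen_in[OF I, of ?t r] ab by (simp add: sign_swap_id)
    moreover have "bv (I, r) - smult (-1) (bv (I, r)) = smult 2 (bv (I, r))"
      by (rule poly_mapping_eqI) (simp add: lookup_minus)
    ultimately show ?thesis unfolding calt_def by (simp add: cspan_half)
  qed
  ultimately show ?thesis by (simp add: calt_neg)
qed

lemma part3:
  assumes "\<forall>p\<in>Poly_Mapping.keys x. valid_tuple n d (fst p)"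
  shows "id_eps (rho n d x) - x \<in> calt n d"
proof -
  have "id_eps (rho n d x) - x = lext (\<lambda>p. id_eps (rho_bas n d p) - bv p) x"
    by (simp add: rho_def id_eps_def lext_lext lext_fun_diff)
  also have "\<dots> = (\<Sum>p\<in>Poly_Mapping.keys x. smult (Poly_Mapping.lookup x p) (id_eps (rho_bas n d p) - bv p))"
    by (simp add: lext_def)
  also have "\<dots> \<in> calt n d"
    unfolding calt_def
  proof (intro cspan_sum cspan.smult)
    fix p assume "p \<in> Poly_Mapping.keys x"
    then have "valid_tuple n d (fst p)" using assms by blast
    then show "id_eps (rho_bas n d p) - bv p \<in> cspan {bv (perm_tuple \<sigma> I, r) - smult (of_int (sign \<sigma>)) (bv (I, r)) | \<sigma> I r.
      valid_tuple n d I \<and> \<sigma> permutes {..<d}}"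
      using part3_basis[of n d "fst p" "snd p"] unfolding calt_def by simp
  qed
  finally show ?thesis .
qed




type_synonym TT = "(ygen list \<times> ygen list) vec"

lemma TT_one: "bv ([], []) = (1 :: TT)"
  using bv_zero_one[where 'a="ygen list \<times> ygen list"] by (simp add: zero_prod_def)

definition Dl :: "nat \<Rightarrow> FA \<Rightarrow> TT" where "Dl n = lext (delta_word n)"

lemma delta_word_foldr: "delta_word n w = foldr (\<lambda>g acc. delta_gen n g * acc) w 1"
  by (simp add: delta_word_def TT_one)

lemma delta_word_append: "delta_word n (v @ w) = delta_word n v * delta_word n w"
  unfolding delta_word_foldr foldr_append by (subst foldr_mult_1) simp

lemma Dl_mult: "Dl n (x * y) = Dl n x * Dl n y"
  unfolding Dl_def by (rule lext_mult_basis) (simp add: delta_word_append)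
lemma Dl_add: "Dl n (x + y) = Dl n x + Dl n y" by (simp add: Dl_def lext_add)
lemma Dl_smult: "Dl n (smult c x) = smult c (Dl n x)" by (simp add: Dl_def lext_smult)
lemma Dl_sum: "Dl n (sum f A) = (\<Sum>a\<in>A. Dl n (f a))" by (simp add: Dl_def lext_sum)
lemma Dl_zero: "Dl n 0 = 0" by (simp add: Dl_def)
lemma one_bv_nil: "(1::FA) = bv []" using bv_zero_one[where 'a="ygen list"] by simp

lemma Dl_one: "Dl n 1 = 1"
  unfolding one_bv_nil Dl_def lext_bv by (simp add: delta_word_def TT_one)

definition E1 :: "FA \<Rightarrow> TT" where "E1 x = tens x 1"
definition E2 :: "FA \<Rightarrow> TT" where "E2 y = tens 1 y"

lemma E1_lext: "E1 x = lext (\<lambda>p. bv (p, [])) x" by (simp add: E1_def tens_def one_bv_nil)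
lemma E2_lext: "E2 y = lext (\<lambda>q. bv ([], q)) y" by (simp add: E2_def tens_def one_bv_nil)

lemma E1_E2: "E1 x * E2 y = tens x y"
proof -
  have "E1 x * E2 y = lext (\<lambda>p. bv (p, []) * lext (\<lambda>q. bv ([], q)) y) x"
    by (simp add: E1_lext E2_lext lext_mult_right)
  also have "\<dots> = lext (\<lambda>p. lext (\<lambda>q. bv (p, []) * bv ([], q)) y) x"
    by (simp add: lext_mult_left)
  also have "\<dots> = tens x y" by (simp add: bv_mult tens_def)
  finally show ?thesis .
qed

lemma E2_E1: "E2 y * E1 x = tens x y"
proof -
  have "E2 y * E1 x = lext (\<lambda>q. bv ([], q) * lext (\<lambda>p. bv (p, [])) x) y"
    by (simp add: E1_lext E2_lext lext_mult_right)
  also have "\<dots> = lext (\<lambda>q. lext (\<lambda>p. bv ([], q) * bv (p, [])) x) y"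
    by (simp add: lext_mult_left)
  also have "\<dots> = lext (\<lambda>q. lext (\<lambda>p. bv (p, q)) x) y" by (simp add: bv_mult)
  also have "\<dots> = tens x y" unfolding tens_def
    by (simp add: lext_def smult_sum sum.swap[of _ "Poly_Mapping.keys y"] mult.commute)
  finally show ?thesis .
qed

lemma E1_mult: "E1 (x * y) = E1 x * E1 y"
  unfolding E1_lext by (rule lext_mult_basis) (simp add: bv_mult)
lemma E2_mult: "E2 (x * y) = E2 x * E2 y"
  unfolding E2_lext by (rule lext_mult_basis) (simp add: bv_mult)
lemma E1_add: "E1 (x + y) = E1 x + E1 y" by (simp add: E1_def tens_add1)
lemma E2_add: "E2 (x + y) = E2 x + E2 y" by (simp add: E2_def tens_add2)
lemma E1_sum: "E1 (sum f A) = (\<Sum>a\<in>A. E1 (f a))" by (simp add: E1_def tens_sum1)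
lemma E2_sum: "E2 (sum f A) = (\<Sum>a\<in>A. E2 (f a))" by (simp add: E2_def tens_sum2)
lemma E1_one: "E1 1 = 1" by (simp add: E1_def one_bv_nil TT_one)
lemma E2_one: "E2 1 = 1" by (simp add: E2_def one_bv_nil TT_one)
lemma E1_zero: "E1 0 = 0" by (simp add: E1_def)
lemma E2_zero: "E2 0 = 0" by (simp add: E2_def)

definition fmap :: "(FA \<Rightarrow> TT) \<Rightarrow> FA fps \<Rightarrow> TT fps" where "fmap h F = Abs_fps (\<lambda>s. h (F $ s))"

lemma fmap_nth: "fmap h F $ s = h (F $ s)" by (simp add: fmap_def)

definition rhom :: "(FA \<Rightarrow> TT) \<Rightarrow> bool" where
  "rhom h \<longleftrightarrow> (\<forall>x y. h (x + y) = h x + h y) \<and> (\<forall>x y. h (x * y) = h x * h y) \<and> h 0 = 0 \<and> h 1 = 1"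

lemma rhom_sum: "rhom h \<Longrightarrow> h (sum f A) = (\<Sum>a\<in>A. h (f a))"
  by (induction A rule: infinite_finite_induct) (auto simp: rhom_def)

lemma fmap_mult: "rhom h \<Longrightarrow> fmap h (F * G) = fmap h F * fmap h G"
  by (rule fps_ext) (simp add: fmap_def fps_mult_nth rhom_sum, simp add: rhom_def)

lemma fmap_one: "rhom h \<Longrightarrow> fmap h 1 = 1"
  by (rule fps_ext) (simp add: fmap_def rhom_def)

lemma fmap_sum: "rhom h \<Longrightarrow> fmap h (sum f A) = (\<Sum>a\<in>A. fmap h (f a))"
  by (rule fps_ext) (simp add: fmap_def fps_sum_nth rhom_sum)

lemma rhom_Dl: "rhom (Dl n)" by (simp add: rhom_def Dl_add Dl_mult Dl_zero Dl_one)
lemma rhom_E1: "rhom E1" by (simp add: rhom_def E1_add E1_mult E1_zero E1_one)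
lemma rhom_E2: "rhom E2" by (simp add: rhom_def E2_add E2_mult E2_zero E2_one)

lemma E12_nth: "(fmap E1 F * fmap E2 G) $ s = (\<Sum>c\<in>{0..s}. tens (F $ c) (G $ (s - c)))"
  by (simp add: fmap_def fps_mult_nth E1_E2)

lemma E12_commute: "fmap E2 G * fmap E1 F = fmap E1 F * fmap E2 G"
proof (rule fps_ext)
  fix s
  have "(fmap E2 G * fmap E1 F) $ s = (\<Sum>i\<in>{0..s}. tens (F $ (s - i)) (G $ i))"
    by (simp add: fmap_def fps_mult_nth E2_E1)
  also have "\<dots> = (\<Sum>i\<in>{0..s}. tens (F $ (s - (s + 0 - i))) (G $ (s + 0 - i)))"
    by (rule sum.atLeastAtMost_rev)
  also have "\<dots> = (\<Sum>i\<in>{0..s}. tens (F $ i) (G $ (s - i)))"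
    by (intro sum.cong refl) auto
  finally show "(fmap E2 G * fmap E1 F) $ s = (fmap E1 F * fmap E2 G) $ s" by (simp add: E12_nth)
qed

lemma tens_one_one: "tens (1::FA) (1::FA) = 1" by (simp add: one_bv_nil TT_one)

lemma Dl_T:
  assumes "i \<in> {1..n}" "j \<in> {1..n}"
  shows "Dl n (T i j r) = (\<Sum>k\<in>{1..n}. \<Sum>b\<in>{0..r}. tens (T i k b) (T k j (r - b)))"
proof (cases "r = 0")
  case True
  have "(\<Sum>k\<in>{1..n}. \<Sum>b\<in>{0..r}. tens (T i k b) (T k j (r - b))) = (\<Sum>k\<in>{1..n}. if k = i then (if i = j then 1 else 0) else 0)"
    using True by (intro sum.cong refl) (auto simp: T0 tens_one_one)
  also have "\<dots> = (if i = j then 1 else 0)" using assms by simp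
  finally show ?thesis using True by (simp add: T0 Dl_one Dl_zero)
next
  case False
  then have "T i j r = bv [(i, j, r)]" by (simp add: T_def)
  then show ?thesis by (simp add: Dl_def delta_word_def delta_gen_def TT_one)
qed

lemma P_mult_same: "P a b * P a c = P a (b + c)"
proof -
  let ?q = "1 + fps_const a * fps_X"
  have inv: "Gs a r * ?q ^ r = 1" for r
  proof (induction r)
    case 0 then show ?case by (simp add: Gs_def fps_ext gbinomial_0_left)
  next
    case (Suc r)
    have "Gs a (Suc r) * ?q ^ Suc r = (Gs a (Suc r) * ?q) * ?q ^ r" by (simp add: algebra_simps)
    then show ?case using Suc by (simp add: Gs_rec)
  qed
  have nz: "?q ^ (b + c) \<noteq> 0"
  proof -
    have h: "?q $ 0 = 1" by simp
    have "?q \<noteq> 0"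
    proof
      assume "?q = 0" then have "?q $ 0 = 0" by simp
      with h show False by simp
    qed
    then show ?thesis by simp
  qed
  have "Gs a b * Gs a c * ?q ^ (b + c) = (Gs a b * ?q ^ b) * (Gs a c * ?q ^ c)" by (simp add: power_add algebra_simps)
  also have "\<dots> = Gs a (b + c) * ?q ^ (b + c)" by (simp add: inv)
  finally have "Gs a b * Gs a c = Gs a (b + c)" by (rule mult_right_cancel[OF nz, THEN iffD1])
  then show ?thesis by (simp add: P_def power_add algebra_simps)
qed

lemma tens_sum_sum: "tens (sum f A) (sum g B) = (\<Sum>a\<in>A. \<Sum>b\<in>B. tens (f a) (g b))"
  by (simp add: tens_sum1 tens_sum2) (rule sum.swap)
lemma tens_smult_smult: "tens (smult c x) (smult d y) = smult (c * d) (tens x y)"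
  by (simp add: tens_smult1 tens_smult2 mult.commute)

lemma CP_tens: "(\<Sum>m=0..N. tens (tser i k a m) (tser k j b (N - m))) = (\<Sum>r\<le>N. \<Sum>s\<le>N. smult ((P a r * P b s) $ N) (tens (T i k r) (T k j s)))"
proof -
  have "(\<Sum>m=0..N. tens (tser i k a m) (tser k j b (N - m))) = (\<Sum>m=0..N. tens (\<Sum>r\<le>N. smult (P a r $ m) (T i k r)) (\<Sum>s\<le>N. smult (P b s $ (N-m)) (T k j s)))"
    by (intro sum.cong refl) (simp add: tser_expand[of _ N])
  also have "\<dots> = (\<Sum>m=0..N. \<Sum>r\<le>N. \<Sum>s\<le>N. smult (P a r $ m * P b s $ (N-m)) (tens (T i k r) (T k j s)))"
    by (simp only: tens_sum_sum tens_smult_smult)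
  also have "\<dots> = (\<Sum>r\<le>N. \<Sum>s\<le>N. \<Sum>m=0..N. smult (P a r $ m * P b s $ (N-m)) (tens (T i k r) (T k j s)))"
    by (subst sum.swap) (simp add: sum.swap[of _ "{0..N}"])
  also have "\<dots> = (\<Sum>r\<le>N. \<Sum>s\<le>N. smult ((P a r * P b s) $ N) (tens (T i k r) (T k j s)))"
    by (simp add: fps_mult_nth smult_sum_left)
  finally show ?thesis .
qed

lemma Dl_tser:
  assumes "i \<in> {1..n}" "j \<in> {1..n}"
  shows "Dl n (tser i j a N) = (\<Sum>k\<in>{1..n}. \<Sum>m=0..N. tens (tser i k a m) (tser k j a (N - m)))"
proof -
  define g where "g k b c = smult (P a (b + c) $ N) (tens (T i k b) (T k j c))" for k b c
  have "Dl n (tser i j a N) = (\<Sum>r\<le>N. smult (P a r $ N) (\<Sum>k\<in>{1..n}. \<Sum>b\<in>{0..r}. tens (T i k b) (T k j (r - b))))"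
    using assms by (simp add: tser_expand[of N N] Dl_sum Dl_smult Dl_T)
  also have "\<dots> = (\<Sum>k\<in>{1..n}. \<Sum>r\<le>N. \<Sum>b\<le>r. g k b (r - b))"
    by (simp add: g_def smult_sum atLeast0AtMost) (rule sum.swap)
  also have "\<dots> = (\<Sum>k\<in>{1..n}. \<Sum>(b, c)\<in>{(b, c). b + c \<le> N}. g k b c)"
    by (simp add: sum.triangle_reindex_eq)
  also have "\<dots> = (\<Sum>k\<in>{1..n}. \<Sum>(b, c)\<in>{..N} \<times> {..N}. g k b c)"
  proof (rule sum.cong[OF refl])
    fix k
    show "(\<Sum>(b, c)\<in>{(b, c). b + c \<le> N}. g k b c) = (\<Sum>(b, c)\<in>{..N} \<times> {..N}. g k b c)"
      by (rule sum.mono_neutral_left) (auto simp: g_def P_nth split: if_splits)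
  qed
  also have "\<dots> = (\<Sum>k\<in>{1..n}. \<Sum>b\<le>N. \<Sum>c\<le>N. g k b c)"
    by (simp add: sum.cartesian_product)
  also have "\<dots> = (\<Sum>k\<in>{1..n}. \<Sum>m=0..N. tens (tser i k a m) (tser k j a (N - m)))"
    by (simp add: CP_tens g_def P_mult_same)
  finally show ?thesis .
qed

lemma fmap_Dl_ts:
  assumes "i \<in> {1..n}" "j \<in> {1..n}"
  shows "fmap (Dl n) (ts i j a) = (\<Sum>k\<in>{1..n}. fmap E1 (ts i k a) * fmap E2 (ts k j a))"
  by (rule fps_ext) (simp add: fps_sum_nth E12_nth fmap_nth ts_nth Dl_tser[OF assms])

lemma foldr_sum_expand:
  fixes h :: "nat \<Rightarrow> nat \<Rightarrow> 'r::semiring_1"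
  assumes A: "finite A"
  shows "foldr (\<lambda>m acc. (\<Sum>k\<in>A. h m k) * acc) xs 1 =
    (\<Sum>L\<in>{L. set L \<subseteq> A \<and> length L = length xs}. foldr (\<lambda>(m, k) acc. h m k * acc) (zip xs L) 1)"
proof (induction xs)
  case Nil
  have "{L. set L \<subseteq> A \<and> length L = 0} = {[]}" by auto
  then show ?case by simp
next
  case (Cons x xs)
  let ?S = "{L. set L \<subseteq> A \<and> length L = length xs}"
  have fin: "finite ?S" using A by (rule finite_lists_length_eq)
  have inj: "inj_on (\<lambda>(L, k). k # L) (?S \<times> A)" by (auto simp: inj_on_def)
  have "(\<Sum>L\<in>{L. set L \<subseteq> A \<and> length L = length (x # xs)}. foldr (\<lambda>(m, k) acc. h m k * acc) (zip (x # xs) L) 1)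
      = (\<Sum>L\<in>(\<lambda>(L, k). k # L) ` (?S \<times> A). foldr (\<lambda>(m, k) acc. h m k * acc) (zip (x # xs) L) 1)"
    by (simp add: lists_length_Suc_eq)
  also have "\<dots> = (\<Sum>(L, k)\<in>?S \<times> A. h x k * foldr (\<lambda>(m, k) acc. h m k * acc) (zip xs L) 1)"
    by (subst sum.reindex[OF inj]) (simp add: case_prod_unfold)
  also have "\<dots> = (\<Sum>L\<in>?S. \<Sum>k\<in>A. h x k * foldr (\<lambda>(m, k) acc. h m k * acc) (zip xs L) 1)"
    by (simp add: sum.cartesian_product)
  also have "\<dots> = (\<Sum>k\<in>A. h x k) * (\<Sum>L\<in>?S. foldr (\<lambda>(m, k) acc. h m k * acc) (zip xs L) 1)"
    by (simp add: sum_distrib_left sum_distrib_right sum.swap[of _ ?S])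
  finally show ?case using Cons by simp
qed

lemma foldr_zip_upt:
  assumes "length L = d"
  shows "foldr (\<lambda>(m, k) acc. h m k * acc) (zip [0..<d] L) z = foldr (\<lambda>m acc. h m (L ! m) * acc) [0..<d] z"
proof -
  have "zip [0..<d] L = map (\<lambda>m. (m, L ! m)) [0..<d]" using assms by (intro nth_equalityI) auto
  then show ?thesis by (simp add: foldr_map o_def)
qed

lemma foldr_commute:
  assumes "\<And>m. c * B m = B m * (c :: 'r::monoid_mult)"
  shows "c * foldr (\<lambda>m acc. B m * acc) xs 1 = foldr (\<lambda>m acc. B m * acc) xs 1 * c"
  using assms by (induction xs) (simp_all, metis mult.assoc)

lemma foldr_split_commute:
  fixes B C :: "nat \<Rightarrow> 'r::monoid_mult"
  assumes "\<And>m m'. C m' * B m = B m * C m'"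
  shows "foldr (\<lambda>m acc. (B m * C m) * acc) xs 1 = foldr (\<lambda>m acc. B m * acc) xs 1 * foldr (\<lambda>m acc. C m * acc) xs 1"
proof (induction xs)
  case Nil then show ?case by simp
next
  case (Cons x xs)
  have c: "C x * foldr (\<lambda>m acc. B m * acc) xs 1 = foldr (\<lambda>m acc. B m * acc) xs 1 * C x"
    by (rule foldr_commute) (rule assms)
  have "foldr (\<lambda>m acc. (B m * C m) * acc) (x # xs) 1 = B x * (C x * foldr (\<lambda>m acc. B m * acc) xs 1) * foldr (\<lambda>m acc. C m * acc) xs 1"
    using Cons by (simp add: mult.assoc)
  also have "\<dots> = (B x * foldr (\<lambda>m acc. B m * acc) xs 1) * (C x * foldr (\<lambda>m acc. C m * acc) xs 1)"
    by (simp add: c mult.assoc)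
  finally show ?case by simp
qed

lemma fmap_foldr: "rhom h \<Longrightarrow> fmap h (foldr (\<lambda>m acc. g m * acc) xs 1) = foldr (\<lambda>m acc. fmap h (g m) * acc) xs 1"
  by (induction xs) (simp_all add: fmap_one fmap_mult)

definition tuples :: "nat \<Rightarrow> nat \<Rightarrow> nat list set" where
  "tuples n d = {L. set L \<subseteq> {1..n} \<and> length L = d}"

lemma finite_tuples: "finite (tuples n d)" unfolding tuples_def by (rule finite_lists_length_eq) simp

lemma Dl_Pr:
  assumes len: "length J = length I" and J: "set J \<subseteq> {1..n}" and I: "set I \<subseteq> {1..n}" and s: "\<sigma> \<in> perms (length I)"
  shows "fmap (Dl n) (Pr J I \<sigma>) = (\<Sum>L\<in>tuples n (length I). fmap E1 (Pr J L \<sigma>) * fmap E2 (Pr L I id))"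
proof -
  let ?d = "length I"
  have "fmap (Dl n) (Pr J I \<sigma>) = foldr (\<lambda>m acc. fmap (Dl n) (gfac J I \<sigma> m) * acc) [0..<?d] 1"
    by (simp add: Pr_def fmap_foldr rhom_Dl)
  also have "\<dots> = foldr (\<lambda>m acc. (\<Sum>k\<in>{1..n}. fmap E1 (ts (J ! \<sigma> m) k (- of_nat m)) * fmap E2 (ts k (I ! m) (- of_nat m))) * acc) [0..<?d] 1"
  proof (intro foldr_cong refl)
    fix m acc assume "m \<in> set [0..<?d]"
    then have m: "m < ?d" by simp
    have "J ! \<sigma> m \<in> {1..n}" using perms_lt[OF s m] len J by (intro set_nth_in) auto
    moreover have "I ! m \<in> {1..n}" using m I by (intro set_nth_in) auto
    ultimately show "fmap (Dl n) (gfac J I \<sigma> m) * acc = (\<Sum>k\<in>{1..n}. fmap E1 (ts (J ! \<sigma> m) k (- of_nat m)) * fmap E2 (ts k (I ! m) (- of_nat m))) * acc"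
      by (simp add: gfac_def fmap_Dl_ts)
  qed
  also have "\<dots> = (\<Sum>L\<in>tuples n ?d. foldr (\<lambda>m acc. (fmap E1 (ts (J ! \<sigma> m) (L ! m) (- of_nat m)) * fmap E2 (ts (L ! m) (I ! m) (- of_nat m))) * acc) [0..<?d] 1)"
    unfolding foldr_sum_expand[OF finite_atLeastAtMost] tuples_def length_upt diff_zero
    by (intro sum.cong refl, rule foldr_zip_upt[where h="\<lambda>m k. fmap E1 (ts (J ! \<sigma> m) k (- of_nat m)) * fmap E2 (ts k (I ! m) (- of_nat m))"]) simp
  also have "\<dots> = (\<Sum>L\<in>tuples n ?d. fmap E1 (Pr J L \<sigma>) * fmap E2 (Pr L I id))"
  proof (intro sum.cong refl)
    fix L assume "L \<in> tuples n ?d"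
    then have lL: "length L = ?d" by (simp add: tuples_def)
    show "foldr (\<lambda>m acc. (fmap E1 (ts (J ! \<sigma> m) (L ! m) (- of_nat m)) * fmap E2 (ts (L ! m) (I ! m) (- of_nat m))) * acc) [0..<?d] 1
      = fmap E1 (Pr J L \<sigma>) * fmap E2 (Pr L I id)"
      by (subst foldr_split_commute) (simp_all add: E12_commute Pr_def fmap_foldr rhom_E1 rhom_E2 gfac_def lL)
  qed
  finally show ?thesis .
qed

lemma Dl_tminor:
  assumes len: "length J = length I" and J: "set J \<subseteq> {1..n}" and I: "set I \<subseteq> {1..n}"
  shows "Dl n (tminor J I s) = (\<Sum>L\<in>tuples n (length I). \<Sum>c\<in>{0..s}. tens (tminor J L c) (Pr L I id $ (s - c)))"
proof -
  have "Dl n (tminor J I s) = (\<Sum>\<sigma>\<in>perms (length I). smult (of_int (sign \<sigma>)) (fmap (Dl n) (Pr J I \<sigma>) $ s))"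
    by (simp add: tminor_Pr Dl_sum Dl_smult fmap_nth)
  also have "\<dots> = (\<Sum>\<sigma>\<in>perms (length I). smult (of_int (sign \<sigma>)) (\<Sum>L\<in>tuples n (length I). \<Sum>c\<in>{0..s}. tens (Pr J L \<sigma> $ c) (Pr L I id $ (s - c))))"
    using assms by (intro sum.cong refl) (simp add: Dl_Pr fps_sum_nth E12_nth)
  also have "\<dots> = (\<Sum>L\<in>tuples n (length I). \<Sum>c\<in>{0..s}. tens (\<Sum>\<sigma>\<in>perms (length I). smult (of_int (sign \<sigma>)) (Pr J L \<sigma> $ c)) (Pr L I id $ (s - c)))"
    by (simp add: smult_sum tens_sum1 tens_smult1 sum.swap[of _ "perms (length I)"])
  also have "\<dots> = (\<Sum>L\<in>tuples n (length I). \<Sum>c\<in>{0..s}. tens (tminor J L c) (Pr L I id $ (s - c)))"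
    by (intro sum.cong refl) (simp add: tminor_Pr tuples_def)
  finally show ?thesis .
qed




definition MID :: "nat \<Rightarrow> (ygen list \<times> ygen list) vec set" where
  "MID n = cspan {tens b y | b y. b \<in> yideal n}"

lemma MID_tens: "b \<in> yideal n \<Longrightarrow> tens b y \<in> MID n"
  unfolding MID_def by (rule cspan.base) blast

lemma MID_sum: "(\<And>a. a \<in> A \<Longrightarrow> f a \<in> MID n) \<Longrightarrow> sum f A \<in> MID n"
  unfolding MID_def by (rule cspan_sum)
lemma MID_add: "x \<in> MID n \<Longrightarrow> y \<in> MID n \<Longrightarrow> x + y \<in> MID n"
  unfolding MID_def by (rule cspan.add)

lemma Pr_perm:
  assumes "length K = length I" "\<sigma> \<in> perms (length I)"
  shows "Pr K I \<sigma> = Pr (perm_tuple \<sigma> K) I id"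
  unfolding Pr_def using assms by (intro foldr_cong refl) (simp add: gfac_def perms_lt)

lemma sum_distinct_bij:
  "(\<Sum>L\<in>{L\<in>tuples n d. distinct L}. F L) = (\<Sum>K\<in>incr_tuples n d. \<Sum>\<sigma>\<in>perms d. F (perm_tuple \<sigma> K))"
proof -
  let ?g = "\<lambda>(K, \<sigma>). perm_tuple \<sigma> K"
  have inj: "inj_on ?g (incr_tuples n d \<times> perms d)"
  proof (rule inj_onI, clarify)
    fix K \<sigma> K' \<sigma>' assume K: "K \<in> incr_tuples n d" "\<sigma> \<in> perms d" and K': "K' \<in> incr_tuples n d" "\<sigma>' \<in> perms d"
      and eq: "perm_tuple \<sigma> K = perm_tuple \<sigma>' K'"
    have lK: "length K = d" "length K' = d" using K K' by (auto simp: incr_tuples_def)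
    have "set K = set K'" using set_perm_eq[of \<sigma> K] set_perm_eq[of \<sigma>' K'] K K' lK eq by simp
    then have "K = K'" using K K' by (intro strict_sorted_equal[symmetric]) (auto simp: incr_tuples_def)
    moreover have "\<sigma> = \<sigma>'" using perm_unique[OF incr_distinct[OF K(1)], of \<sigma> \<sigma>'] K K' lK eq \<open>K = K'\<close> by simp
    ultimately show "K = K' \<and> \<sigma> = \<sigma>'" by simp
  qed
  have img: "?g ` (incr_tuples n d \<times> perms d) = {L\<in>tuples n d. distinct L}"
  proof
    show "?g ` (incr_tuples n d \<times> perms d) \<subseteq> {L\<in>tuples n d. distinct L}"
    proof
      fix L assume "L \<in> ?g ` (incr_tuples n d \<times> perms d)"
      then obtain K \<sigma> where K: "K \<in> incr_tuples n d" and s: "\<sigma> \<in> perms d" and L: "L = perm_tuple \<sigma> K" by auto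
      have lK: "length K = d" using K by (simp add: incr_tuples_def)
      show "L \<in> {L\<in>tuples n d. distinct L}"
        using set_perm_eq[of \<sigma> K] distinct_perm_eq[of \<sigma> K] incr_distinct[OF K] K s lK
        by (auto simp: tuples_def incr_tuples_def L)
    qed
  next
    show "{L\<in>tuples n d. distinct L} \<subseteq> ?g ` (incr_tuples n d \<times> perms d)"
    proof clarify
      fix L assume L: "L \<in> tuples n d" "distinct L"
      define K where "K = sorted_list_of_set (set L)"
      have Ks: "sorted_wrt (<) K" "set K = set L" "length K = d"
        using distinct_card[OF L(2)] L(1) by (simp_all add: K_def tuples_def)
      have Kin: "K \<in> incr_tuples n d" using Ks L(1) by (simp add: incr_tuples_def tuples_def)
      obtain \<sigma> where "\<sigma> \<in> perms (length L)" "perm_tuple \<sigma> K = L"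
        using perm_exists[OF L(2) _ Ks(2)] Ks by (auto simp: strict_sorted_iff)
      then show "L \<in> ?g ` (incr_tuples n d \<times> perms d)" using Kin L(1)
        by (intro image_eqI[of _ _ "(K, \<sigma>)"]) (auto simp: tuples_def)
    qed
  qed
  have "(\<Sum>K\<in>incr_tuples n d. \<Sum>\<sigma>\<in>perms d. F (perm_tuple \<sigma> K)) = (\<Sum>p\<in>incr_tuples n d \<times> perms d. F (?g p))"
    by (simp add: sum.cartesian_product case_prod_unfold)
  also have "\<dots> = (\<Sum>L\<in>?g ` (incr_tuples n d \<times> perms d). F L)"
    using sum.reindex[OF inj, of F] by (simp add: o_def)
  finally show ?thesis using img by simp
qed

lemma lemQ:
  assumes J: "length J = d" "set J \<subseteq> {1..n}" and I: "length I = d" "set I \<subseteq> {1..n}"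
  shows "(\<Sum>L\<in>tuples n d. tens (tminor J L c) (Pr L I id $ m)) - (\<Sum>K\<in>incr_tuples n d. tens (tminor J K c) (tminor K I m)) \<in> MID n"
proof -
  define F where "F L = tens (tminor J L c) (Pr L I id $ m)" for L
  have split: "(\<Sum>L\<in>tuples n d. F L) = (\<Sum>L\<in>{L\<in>tuples n d. distinct L}. F L) + (\<Sum>L\<in>{L\<in>tuples n d. \<not> distinct L}. F L)"
  proof -
    have "sum F (tuples n d) = (\<Sum>L\<in>tuples n d. if distinct L then F L else 0) + (\<Sum>L\<in>tuples n d. if \<not> distinct L then F L else 0)"
      by (subst sum.distrib[symmetric]) (rule sum.cong, auto)
    then show ?thesis by (simp add: sum.inter_filter[OF finite_tuples])
  qed
  have nd: "(\<Sum>L\<in>{L\<in>tuples n d. \<not> distinct L}. F L) \<in> MID n"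
  proof (intro MID_sum)
    fix L assume "L \<in> {L\<in>tuples n d. \<not> distinct L}"
    then show "F L \<in> MID n" unfolding F_def using J
      by (intro MID_tens tminor_nondistinct) (auto simp: tuples_def)
  qed
  have K: "(\<Sum>K\<in>incr_tuples n d. tens (tminor J K c) (tminor K I m)) =
      (\<Sum>K\<in>incr_tuples n d. \<Sum>\<sigma>\<in>perms d. smult (of_int (sign \<sigma>)) (tens (tminor J K c) (Pr (perm_tuple \<sigma> K) I id $ m)))"
  proof (intro sum.cong refl)
    fix K assume "K \<in> incr_tuples n d"
    then have lK: "length K = d" by (simp add: incr_tuples_def)
    show "tens (tminor J K c) (tminor K I m) = (\<Sum>\<sigma>\<in>perms d. smult (of_int (sign \<sigma>)) (tens (tminor J K c) (Pr (perm_tuple \<sigma> K) I id $ m)))"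
      using I lK by (simp add: tminor_Pr tens_sum2 tens_smult2 Pr_perm)
  qed
  have diff: "(\<Sum>L\<in>{L\<in>tuples n d. distinct L}. F L) - (\<Sum>K\<in>incr_tuples n d. tens (tminor J K c) (tminor K I m))
     = (\<Sum>K\<in>incr_tuples n d. \<Sum>\<sigma>\<in>perms d. tens (tminor J (perm_tuple \<sigma> K) c - smult (of_int (sign \<sigma>)) (tminor J K c)) (Pr (perm_tuple \<sigma> K) I id $ m))"
    unfolding sum_distinct_bij K F_def by (simp add: tens_diff1 tens_smult1 sum_subtractf)
  have "(\<Sum>K\<in>incr_tuples n d. \<Sum>\<sigma>\<in>perms d. tens (tminor J (perm_tuple \<sigma> K) c - smult (of_int (sign \<sigma>)) (tminor J K c)) (Pr (perm_tuple \<sigma> K) I id $ m)) \<in> MID n"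
  proof (intro MID_sum MID_tens)
    fix K \<sigma> assume "K \<in> incr_tuples n d" "\<sigma> \<in> perms d"
    then show "tminor J (perm_tuple \<sigma> K) c - smult (of_int (sign \<sigma>)) (tminor J K c) \<in> yideal n"
      using J by (intro tminor_antisym) (auto simp: incr_tuples_def)
  qed
  then have "((\<Sum>L\<in>{L\<in>tuples n d. distinct L}. F L) - (\<Sum>K\<in>incr_tuples n d. tens (tminor J K c) (tminor K I m)))
      + (\<Sum>L\<in>{L\<in>tuples n d. \<not> distinct L}. F L) \<in> MID n"
    using nd by (simp only: diff MID_add)
  then show ?thesis unfolding F_def[symmetric] split by (simp add: algebra_simps)
qed

lemma LT: "lext (\<lambda>(q, v). bv (q, v, w)) (tens X Z) = tens X (tens Z (bv w))"
  by (simp add: tens_def lext_lext)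

lemma tens_tens_lext: "lext (\<lambda>w. tens A (tens B (bv w))) y = tens A (tens B y)"
proof -
  have "tens B y = lext (\<lambda>w. tens B (bv w)) y" using tens_lext2[of B bv y] by simp
  then show ?thesis by (simp add: tens_lext2)
qed

lemma rho_id_tens:
  "rho_id n d (tens (bv (K, b)) y) = (\<Sum>J\<in>incr_tuples n d. \<Sum>a\<in>{0..b}. tens (bv (J, a)) (tens (tminor J K (b - a)) y))"
proof -
  have "rho_id n d (tens (bv (K, b)) y) = lext (\<lambda>w. lext (\<lambda>(q, v). bv (q, v, w)) (rho_bas n d (K, b))) y"
    by (simp add: rho_id_def tens_bv1 lext_lext)
  also have "\<dots> = lext (\<lambda>w. \<Sum>J\<in>incr_tuples n d. \<Sum>a\<in>{0..b}. tens (bv (J, a)) (tens (tminor J K (b - a)) (bv w))) y"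
    by (simp add: rho_bas_def lext_sum LT)
  also have "\<dots> = (\<Sum>J\<in>incr_tuples n d. \<Sum>a\<in>{0..b}. tens (bv (J, a)) (tens (tminor J K (b - a)) y))"
    by (simp add: lext_fun_sum tens_tens_lext)
  finally show ?thesis .
qed

lemma id_delta_tens: "id_delta n (tens (bv q) y) = tens (bv q) (Dl n y)"
proof -
  have "id_delta n (tens (bv q) y) = lext (\<lambda>w. lext (\<lambda>(v1, v2). bv (q, v1, v2)) (delta_word n w)) y"
    by (simp add: id_delta_def tens_bv1 lext_lext)
  also have "\<dots> = lext (\<lambda>w. tens (bv q) (delta_word n w)) y"
    by (simp add: tens_bv1 case_prod_unfold)
  also have "\<dots> = tens (bv q) (Dl n y)" by (simp add: Dl_def tens_lext2)
  finally show ?thesis .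
qed

lemma triangle_swap:
  "(\<Sum>b\<in>{0..r}. \<Sum>a\<in>{0..b}. h a b) = (\<Sum>a\<in>{0..r::nat}. \<Sum>c\<in>{0..r - a}. h a (a + c))"
proof -
  have "(\<Sum>b\<in>{0..r}. \<Sum>a\<in>{0..b}. h a b) = (\<Sum>(b, a)\<in>Sigma {0..r} (\<lambda>b. {0..b}). h a b)"
    by (simp add: sum.Sigma)
  also have "\<dots> = (\<Sum>(a, c)\<in>Sigma {0..r} (\<lambda>a. {0..r - a}). h a (a + c))"
    by (rule sum.reindex_bij_witness[where i="\<lambda>(a, c). (a + c, a)" and j="\<lambda>(b, a). (a, b - a)"]) auto
  also have "\<dots> = (\<Sum>a\<in>{0..r}. \<Sum>c\<in>{0..r - a}. h a (a + c))"
    by (simp add: sum.Sigma)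
  finally show ?thesis .
qed

lemma ker3_mid: "z \<in> MID n \<Longrightarrow> tens x z \<in> ker3 n d"
proof -
  assume z: "z \<in> MID n"
  have "tens x g \<in> ker3 n d" if "g \<in> {tens b y | b y. b \<in> yideal n}" for g
  proof -
    from that obtain b y where g: "g = tens b y" and b: "b \<in> yideal n" by blast
    have "tens x g \<in> {tens x (tens b y) | x b y. b \<in> yideal n}" using g b by blast
    then show ?thesis unfolding ker3_def by (intro cspan.base) blast
  qed
  then show ?thesis using z unfolding MID_def ker3_def by (rule cspan_image[OF lin_tens2])
qed

lemma ker3_sum: "(\<And>a. a \<in> A \<Longrightarrow> f a \<in> ker3 n d) \<Longrightarrow> sum f A \<in> ker3 n d"
  unfolding ker3_def by (rule cspan_sum)

lemma rho_id_sum: "rho_id n d (sum f A) = (\<Sum>a\<in>A. rho_id n d (f a))"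
  unfolding rho_id_def by (rule lext_sum)
lemma id_delta_sum: "id_delta n (sum f A) = (\<Sum>a\<in>A. id_delta n (f a))"
  unfolding id_delta_def by (rule lext_sum)
lemma rho_id_lext: "rho_id n d (lext f x) = lext (\<lambda>p. rho_id n d (f p)) x"
  unfolding rho_id_def by (rule lext_lext)
lemma id_delta_lext: "id_delta n (lext f x) = lext (\<lambda>p. id_delta n (f p)) x"
  unfolding id_delta_def by (rule lext_lext)

lemma part2_basis:
  assumes I: "valid_tuple n d I"
  shows "rho_id n d (rho_bas n d (I, r)) - id_delta n (rho_bas n d (I, r)) \<in> ker3 n d"
proof -
  have lI: "length I = d" and sI: "set I \<subseteq> {1..n}" using I by (auto simp: valid_tuple_def)
  define W where "W J a = (\<Sum>c\<in>{0..r - a}. \<Sum>K\<in>incr_tuples n d. tens (tminor J K c) (tminor K I (r - a - c)))" for J a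
  define V where "V J a = (\<Sum>c\<in>{0..r - a}. \<Sum>L\<in>tuples n d. tens (tminor J L c) (Pr L I id $ (r - a - c)))" for J a
  have rid: "rho_id n d (rho_bas n d (I, r)) = (\<Sum>J\<in>incr_tuples n d. \<Sum>a\<in>{0..r}. tens (bv (J, a)) (W J a))"
  proof -
    have "rho_id n d (rho_bas n d (I, r)) = (\<Sum>K\<in>incr_tuples n d. \<Sum>b\<in>{0..r}. \<Sum>J\<in>incr_tuples n d. \<Sum>a\<in>{0..b}.
        tens (bv (J, a)) (tens (tminor J K (b - a)) (tminor K I (r - b))))"
      by (simp add: rho_bas_def rho_id_sum rho_id_tens)
    also have "\<dots> = (\<Sum>J\<in>incr_tuples n d. \<Sum>K\<in>incr_tuples n d. \<Sum>b\<in>{0..r}. \<Sum>a\<in>{0..b}.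
        tens (bv (J, a)) (tens (tminor J K (b - a)) (tminor K I (r - b))))"
      by (subst sum.swap, rule sum.cong[OF refl], rule sum.swap)
    also have "\<dots> = (\<Sum>J\<in>incr_tuples n d. \<Sum>K\<in>incr_tuples n d. \<Sum>a\<in>{0..r}. \<Sum>c\<in>{0..r - a}.
        tens (bv (J, a)) (tens (tminor J K c) (tminor K I (r - a - c))))"
      by (simp add: triangle_swap)
    also have "\<dots> = (\<Sum>J\<in>incr_tuples n d. \<Sum>a\<in>{0..r}. tens (bv (J, a)) (W J a))"
    proof (rule sum.cong[OF refl])
      fix J
      have "(\<Sum>K\<in>incr_tuples n d. \<Sum>a\<in>{0..r}. \<Sum>c\<in>{0..r - a}. tens (bv (J, a)) (tens (tminor J K c) (tminor K I (r - a - c))))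
        = (\<Sum>a\<in>{0..r}. \<Sum>K\<in>incr_tuples n d. \<Sum>c\<in>{0..r - a}. tens (bv (J, a)) (tens (tminor J K c) (tminor K I (r - a - c))))"
        by (rule sum.swap)
      also have "\<dots> = (\<Sum>a\<in>{0..r}. \<Sum>c\<in>{0..r - a}. \<Sum>K\<in>incr_tuples n d. tens (bv (J, a)) (tens (tminor J K c) (tminor K I (r - a - c))))"
        by (rule sum.cong[OF refl], rule sum.swap)
      also have "\<dots> = (\<Sum>a\<in>{0..r}. tens (bv (J, a)) (W J a))"
        by (simp add: W_def tens_sum2)
      finally show "(\<Sum>K\<in>incr_tuples n d. \<Sum>a\<in>{0..r}. \<Sum>c\<in>{0..r - a}. tens (bv (J, a)) (tens (tminor J K c) (tminor K I (r - a - c))))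
        = (\<Sum>a\<in>{0..r}. tens (bv (J, a)) (W J a))" .
    qed
    finally show ?thesis .
  qed
  have idd: "id_delta n (rho_bas n d (I, r)) = (\<Sum>J\<in>incr_tuples n d. \<Sum>a\<in>{0..r}. tens (bv (J, a)) (V J a))"
  proof -
    have "id_delta n (rho_bas n d (I, r)) = (\<Sum>J\<in>incr_tuples n d. \<Sum>a\<in>{0..r}. tens (bv (J, a)) (Dl n (tminor J I (r - a))))"
      by (simp add: rho_bas_def id_delta_sum id_delta_tens)
    also have "\<dots> = (\<Sum>J\<in>incr_tuples n d. \<Sum>a\<in>{0..r}. tens (bv (J, a)) (V J a))"
    proof (intro sum.cong refl arg_cong2[where f=tens])
      fix J a assume "J \<in> incr_tuples n d"
      then have "length J = length I" "set J \<subseteq> {1..n}" using lI by (auto simp: incr_tuples_def)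
      then show "Dl n (tminor J I (r - a)) = V J a"
        using sI lI by (simp add: Dl_tminor V_def sum.swap[of _ "tuples n d"])
    qed
    finally show ?thesis .
  qed
  have "rho_id n d (rho_bas n d (I, r)) - id_delta n (rho_bas n d (I, r)) =
     (\<Sum>J\<in>incr_tuples n d. \<Sum>a\<in>{0..r}. tens (bv (J, a)) (W J a - V J a))"
    by (simp add: rid idd tens_diff2 sum_subtractf)
  also have "\<dots> \<in> ker3 n d"
  proof (intro ker3_sum ker3_mid)
    fix J a assume J: "J \<in> incr_tuples n d"
    have "W J a - V J a = - (\<Sum>c\<in>{0..r - a}. (\<Sum>L\<in>tuples n d. tens (tminor J L c) (Pr L I id $ (r - a - c)))
        - (\<Sum>K\<in>incr_tuples n d. tens (tminor J K c) (tminor K I (r - a - c))))"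
      by (simp add: W_def V_def sum_subtractf)
    also have "\<dots> \<in> MID n"
      unfolding MID_def
    proof (intro cspan_neg cspan_sum, fold MID_def)
      fix c show "(\<Sum>L\<in>tuples n d. tens (tminor J L c) (Pr L I id $ (r - a - c)))
        - (\<Sum>K\<in>incr_tuples n d. tens (tminor J K c) (tminor K I (r - a - c))) \<in> MID n"
        using J lI sI by (intro lemQ) (auto simp: incr_tuples_def)
    qed
    finally show "W J a - V J a \<in> MID n" .
  qed
  finally show ?thesis .
qed

lemma part2:
  assumes "\<forall>p\<in>Poly_Mapping.keys x. valid_tuple n d (fst p)"
  shows "rho_id n d (rho n d x) - id_delta n (rho n d x) \<in> ker3 n d"
proof -
  have "rho_id n d (rho n d x) - id_delta n (rho n d x) = lext (\<lambda>p. rho_id n d (rho_bas n d p) - id_delta n (rho_bas n d p)) x"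
    by (simp add: rho_def rho_id_lext id_delta_lext lext_fun_diff)
  also have "\<dots> = (\<Sum>p\<in>Poly_Mapping.keys x. smult (Poly_Mapping.lookup x p) (rho_id n d (rho_bas n d p) - id_delta n (rho_bas n d p)))"
    by (simp add: lext_def)
  also have "\<dots> \<in> ker3 n d"
    unfolding ker3_def
  proof (intro cspan_sum cspan.smult, fold ker3_def)
    fix p assume "p \<in> Poly_Mapping.keys x"
    then have "valid_tuple n d (fst p)" using assms by blast
    then show "rho_id n d (rho_bas n d p) - id_delta n (rho_bas n d p) \<in> ker3 n d"
      using part2_basis[of n d "fst p" "snd p"] by simp
  qed
  finally show ?thesis .
qed

theorem mainTheorem5:
  fixes n d :: nat
  assumes "1 \<le> d" and "d \<le> n"
  shows "(\<forall>x \<in> calt n d. rho n d x \<in> ker2 n d)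
       \<and> (\<forall>x. (\<forall>p \<in> Poly_Mapping.keys x. valid_tuple n d (fst p)) \<longrightarrow>
              rho_id n d (rho n d x) - id_delta n (rho n d x) \<in> ker3 n d)
       \<and> (\<forall>x. (\<forall>p \<in> Poly_Mapping.keys x. valid_tuple n d (fst p)) \<longrightarrow>
              id_eps (rho n d x) - x \<in> calt n d)"
  using part1 part2 part3 by blast


end
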